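(* Let $V$ be a reflexive Banach space, $X$ a Banach space, $\gamma\in\mathcal{L}(V,X)$ with $c_\gamma:=\|\gamma\|_{\mathcal{L}(V,X)}$ and adjoint $\gamma^*\colon X^*\to V^*$. Let $A\colon V\to V^*$, $J\colon X\times X\to\mathbb{R}$ and $f\in V^*$ satisfy: (A1) $A$ is linear and bounded; (A2) $\langle Au,v\rangle_{V^*\times V}=\langle Av,u\rangle_{V^*\times V}$ for all $u,v\in V$; (A3) there is $m_A>0$ with $\langle Au,u\rangle_{V^*\times V}\ge m_A\|u\|_V^2$ for all $u\in V$; (J1) $J$ is locally Lipschitz continuous with respect to its second variable; (J2) there exist $c_0,c_1,c_2\ge 0$ with $\|\partial_2 J(w,v)\|_{X^*}\le c_0+c_1\|v\|_X+c_2\|w\|_X$ for all $w,v\in X$; (J3) there exist $m_\alpha,m_L\ge0$ such that $J_2^0(w_1,v_1;v_2-v_1)+J_2^0(w_2,v_2;v_1-v_2)\le m_\alpha\|v_1-v_2\|_X^2+m_L\|w_1-w_2\|_X\|v_1-v_2\|_X$ for all $w_1,w_2,v_1,v_2\in X$; (S) $m_A>(m_\alpha+m_L)c_\gamma^2$. Let $\mathcal{L}(w,v)=\tfrac12\langle Av,v\rangle_{V^*\times V}-\langle f,v\rangle_{V^*\times V}+J(\gamma w,\gamma v)$ for $w,v\in V$. Consider Problem (I): find $u\in V$ with $Au+\gamma^*\partial_2J(\gamma u,\gamma u)\ni f$; and Problem (O): find $u\in V$ with $0\in\partial_2\mathcal{L}(u,u)$. Then Problems (I) and (O) are equivalent (have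 the same solutions), they have a unique solution $u\in V$, and this solution satisfies $\|u\|_V\le c\,(1+\|f\|_{V^*})$ with a positive constant $c$.
   Context: For a locally Lipschitz function $g$ on a Banach space $Y$, the generalized (Clarke) directional derivative at $x$ in direction $v$ is $g^0(x;v)=\limsup_{y\to x,\lambda\searrow0}\frac{g(y+\lambda v)-g(y)}{\lambda}$, and the Clarke subdifferential is $\partial g(x)=\{\xi\in Y^*:\langle\xi,v\rangle\le g^0(x;v)\ \forall v\in Y\}$. For a function of two variables, $\partial_2$ and $(\cdot)_2^0$ denote the Clarke subdifferential and generalized directional derivative with respect to the second variable. $\|\partial_2J(w,v)\|_{X^*}$ denotes $\sup\{\|\xi\|_{X^*}:\xi\in\partial_2J(w,v)\}$. *)

theory Defs
  imports "HOL-Analysis.Analysis"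
begin

definition reflexive_space :: "'v::real_normed_vector itself \<Rightarrow> bool" where
  "reflexive_space _ \<longleftrightarrow>
     (\<forall>\<phi> :: ('v \<Rightarrow>\<^sub>L real) \<Rightarrow>\<^sub>L real. \<exists>v::'v. \<forall>\<xi>::'v \<Rightarrow>\<^sub>L real. blinfun_apply \<phi> \<xi> = blinfun_apply \<xi> v)"

definition loc_lipschitz :: "('a::real_normed_vector \<Rightarrow> real) \<Rightarrow> bool" where
  "loc_lipschitz g \<longleftrightarrow> (\<forall>x. \<exists>r>0. \<exists>L. L-lipschitz_on (ball x r) g)"

definition clarke_dd :: "('a::real_normed_vector \<Rightarrow> real) \<Rightarrow> 'a \<Rightarrow> 'a \<Rightarrow> ereal" where
  "clarke_dd g x v =
     Limsup (nhds x \<times>\<^sub>F at_right 0) (\<lambda>(y, t). ereal ((g (y + t *\<^sub>R v) - g y) / t))"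

definition clarke_subdiff :: "('a::real_normed_vector \<Rightarrow> real) \<Rightarrow> 'a \<Rightarrow> ('a \<Rightarrow>\<^sub>L real) set" where
  "clarke_subdiff g x = {\<xi>. \<forall>v. ereal (blinfun_apply \<xi> v) \<le> clarke_dd g x v}"

definition lagr ::
  "('v::real_normed_vector \<Rightarrow> ('v \<Rightarrow>\<^sub>L real)) \<Rightarrow> ('v \<Rightarrow>\<^sub>L real) \<Rightarrow>
   ('x::real_normed_vector \<Rightarrow> 'x \<Rightarrow> real) \<Rightarrow> ('v \<Rightarrow>\<^sub>L 'x) \<Rightarrow> 'v \<Rightarrow> 'v \<Rightarrow> real" where
  "lagr A f J \<gamma> w v = (1/2) * blinfun_apply (A v) v - blinfun_apply f v + J (blinfun_apply \<gamma> w) (blinfun_apply \<gamma> v)"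

definition problem_I ::
  "('v::real_normed_vector \<Rightarrow> ('v \<Rightarrow>\<^sub>L real)) \<Rightarrow> ('v \<Rightarrow>\<^sub>L real) \<Rightarrow>
   ('x::real_normed_vector \<Rightarrow> 'x \<Rightarrow> real) \<Rightarrow> ('v \<Rightarrow>\<^sub>L 'x) \<Rightarrow> 'v \<Rightarrow> bool" where
  "problem_I A f J \<gamma> u \<longleftrightarrow>
     (\<exists>\<xi> \<in> clarke_subdiff (J (blinfun_apply \<gamma> u)) (blinfun_apply \<gamma> u). A u + (\<xi> o\<^sub>L \<gamma>) = f)"

definition problem_O ::
  "('v::real_normed_vector \<Rightarrow> ('v \<Rightarrow>\<^sub>L real)) \<Rightarrow> ('v \<Rightarrow>\<^sub>L real) \<Rightarrow>
   ('x::real_normed_vector \<Rightarrow> 'x \<Rightarrow> real) \<Rightarrow> ('v \<Rightarrow>\<^sub>L 'x) \<Rightarrow> 'v \<Rightarrow> bool" where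
  "problem_O A f J \<gamma> u \<longleftrightarrow> 0 \<in> clarke_subdiff (lagr A f J \<gamma> u) u"

end

theory Submission
  imports Defs
begin


definition cquot :: "('a::real_normed_vector \<Rightarrow> real) \<Rightarrow> 'a \<Rightarrow> 'a \<times> real \<Rightarrow> real" where
  "cquot g v p = (g (fst p + snd p *\<^sub>R v) - g (fst p)) / snd p"

abbreviation CF :: "'a::real_normed_vector \<Rightarrow> ('a \<times> real) filter" where
  "CF x \<equiv> nhds x \<times>\<^sub>F at_right (0::real)"

lemma clarke_dd_alt: "clarke_dd g x v = Limsup (CF x) (\<lambda>p. ereal (cquot g v p))"
  unfolding clarke_dd_def cquot_def by (simp add: case_prod_unfold)

lemma CF_nontriv: "CF x \<noteq> bot"
  by (simp add: prod_filter_eq_bot)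

lemma loc_lipschitzE:
  assumes "loc_lipschitz g"
  obtains r L where "r > 0" "L \<ge> 0" "L-lipschitz_on (ball x r) g"
  using assms unfolding loc_lipschitz_def lipschitz_on_def by blast

lemma at_right_small:
  assumes "r > 0"
  shows "eventually (\<lambda>t. 0 < t \<and> t * c < r) (at_right (0::real))"
  unfolding eventually_at_right_field
proof (intro exI conjI allI impI)
  show "0 < r / (\<bar>c\<bar> + 1)" using assms by auto
  fix t :: real assume t: "0 < t" "t < r / (\<bar>c\<bar> + 1)"
  then show "0 < t" by simp
  have "t * c \<le> t * (\<bar>c\<bar> + 1)" using t by (intro mult_left_mono) auto
  also have "\<dots> < r" using t by (simp add: field_simps)
  finally show "t * c < r" .
qed

lemma cquot_bound_eventually:
  assumes "r > 0" "L-lipschitz_on (ball x r) g"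
  shows "eventually (\<lambda>p. \<bar>cquot g v p\<bar> \<le> L * norm v) (CF x)"
  unfolding eventually_prod_filter
proof (intro exI conjI allI impI)
  show "eventually (\<lambda>y. y \<in> ball x (r/2)) (nhds x)"
    by (rule eventually_nhds_in_open) (use assms in auto)
  show "eventually (\<lambda>t. 0 < t \<and> t * norm v < r/2) (at_right (0::real))"
    by (rule at_right_small) (use assms in auto)
  fix y t assume y: "y \<in> ball x (r/2)" and t: "0 < t \<and> t * norm v < r/2"
  have yb: "y \<in> ball x r" using y assms by auto
  have "dist x (y + t *\<^sub>R v) \<le> dist x y + dist y (y + t *\<^sub>R v)" by (rule dist_triangle)
  also have "dist y (y + t *\<^sub>R v) = t * norm v" using t by (simp add: dist_norm)
  finally have yt: "y + t *\<^sub>R v \<in> ball x r" using y t by auto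
  have "\<bar>g (y + t *\<^sub>R v) - g y\<bar> \<le> L * dist (y + t *\<^sub>R v) y"
    using lipschitz_onD[OF assms(2) yt yb] by (simp add: dist_real_def)
  also have "dist (y + t *\<^sub>R v) y = t * norm v" using t by (simp add: dist_norm)
  finally have "\<bar>g (y + t *\<^sub>R v) - g y\<bar> / t \<le> L * norm v"
    using t by (simp add: divide_le_eq mult.commute mult.left_commute)
  then show "\<bar>cquot g v (y, t)\<bar> \<le> L * norm v"
    using t by (simp add: cquot_def abs_divide)
qed

lemma clarke_bounds:
  assumes "loc_lipschitz g"
  obtains K where "K \<ge> 0" "\<And>v. clarke_dd g x v \<le> ereal (K * norm v)"
    "\<And>v. ereal (- (K * norm v)) \<le> clarke_dd g x v"
proof -
  obtain r L where rL: "r > 0" "L \<ge> 0" "L-lipschitz_on (ball x r) g"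
    using loc_lipschitzE[OF assms] by blast
  show ?thesis
  proof (rule that[of L])
    fix v
    have ev: "eventually (\<lambda>p. \<bar>cquot g v p\<bar> \<le> L * norm v) (CF x)"
      by (rule cquot_bound_eventually[OF rL(1,3)])
    show "clarke_dd g x v \<le> ereal (L * norm v)"
      unfolding clarke_dd_alt
      by (rule Limsup_bounded) (use ev in \<open>eventually_elim, auto\<close>)
    show "ereal (- (L * norm v)) \<le> clarke_dd g x v"
      unfolding clarke_dd_alt
      by (rule le_Limsup[OF CF_nontriv]) (use ev in \<open>eventually_elim, auto\<close>)
  qed (use rL in auto)
qed

definition cdd :: "('a::real_normed_vector \<Rightarrow> real) \<Rightarrow> 'a \<Rightarrow> 'a \<Rightarrow> real" where
  "cdd g x v = real_of_ereal (clarke_dd g x v)"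

lemma clarke_dd_real:
  assumes "loc_lipschitz g"
  shows "clarke_dd g x v = ereal (cdd g x v)"
proof -
  obtain K where K: "K \<ge> 0" "\<And>v. clarke_dd g x v \<le> ereal (K * norm v)"
    "\<And>v. ereal (- (K * norm v)) \<le> clarke_dd g x v"
    using clarke_bounds[OF assms] by blast
  have "\<bar>clarke_dd g x v\<bar> \<noteq> \<infinity>" using K(2)[of v] K(3)[of v] by auto
  then show ?thesis unfolding cdd_def by (simp add: ereal_real')
qed

lemma clarke_upD:
  assumes "clarke_dd g x v < ereal M"
  shows "eventually (\<lambda>p. cquot g v p < M) (CF x)"
  using Limsup_lessD[OF assms[unfolded clarke_dd_alt]] by simp

lemma dini_upper:
  assumes "clarke_dd g z (l *\<^sub>R d) \<le> ereal M" "l > 0" "e > 0"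
  shows "\<exists>\<delta>>0. \<forall>s. 0 < s \<and> s < \<delta> \<longrightarrow> (g (z + s *\<^sub>R d) - g z) / s < M / l + e"
proof -
  have "clarke_dd g z (l *\<^sub>R d) < ereal (M + e * l)" using assms by (simp add: order_le_less_trans)
  from clarke_upD[OF this] obtain Pf Pg where P: "eventually Pf (nhds z)" "eventually Pg (at_right 0)"
    "\<And>y t. Pf y \<Longrightarrow> Pg t \<Longrightarrow> cquot g (l *\<^sub>R d) (y, t) < M + e * l"
    unfolding eventually_prod_filter by blast
  have Pz: "Pf z" using P(1) eventually_nhds_x_imp_x by blast
  obtain b where b: "b > 0" "\<And>t. 0 < t \<Longrightarrow> t < b \<Longrightarrow> Pg t"
    using P(2) unfolding eventually_at_right_field by auto
  show ?thesis
  proof (intro exI[of _ "b * l"] conjI allI impI)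
    show "0 < b * l" using b assms by simp
    fix s assume s: "0 < s \<and> s < b * l"
    have "Pg (s / l)" using s assms by (intro b(2)) (auto simp: field_simps)
    then have "cquot g (l *\<^sub>R d) (z, s / l) < M + e * l" using P(3) Pz by blast
    also have "cquot g (l *\<^sub>R d) (z, s / l) = l * ((g (z + s *\<^sub>R d) - g z) / s)"
      using assms s by (simp add: cquot_def field_simps)
    finally show "(g (z + s *\<^sub>R d) - g z) / s < M / l + e"
      using assms by (simp add: field_simps)
  qed
qed

lemma clarke_low:
  assumes "\<And>e. e > 0 \<Longrightarrow> \<exists>\<delta>>0. \<forall>t. 0 < t \<and> t < \<delta> \<longrightarrow> a - e < cquot g v (x, t)"
  shows "ereal a \<le> clarke_dd g x v"
proof (rule ccontr)
  assume "\<not> ereal a \<le> clarke_dd g x v"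
  then have "clarke_dd g x v < ereal a" by simp
  then obtain z where z: "clarke_dd g x v < ereal z" "ereal z < ereal a"
    using ereal_dense2 by blast
  from clarke_upD[OF z(1)] obtain Pf Pg where P: "eventually Pf (nhds x)" "eventually Pg (at_right 0)"
    "\<And>y t. Pf y \<Longrightarrow> Pg t \<Longrightarrow> cquot g v (y, t) < z"
    unfolding eventually_prod_filter by blast
  have Px: "Pf x" using P(1) eventually_nhds_x_imp_x by blast
  obtain b where b: "b > 0" "\<And>t. 0 < t \<Longrightarrow> t < b \<Longrightarrow> Pg t"
    using P(2) unfolding eventually_at_right_field by auto
  obtain \<delta> where d: "\<delta> > 0" "\<And>t. 0 < t \<and> t < \<delta> \<Longrightarrow> a - (a - z) < cquot g v (x, t)"
    using assms[of "a - z"] z(2) by auto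
  define t where "t = min b \<delta> / 2"
  have t: "0 < t" "t < b" "t < \<delta>" using b d by (auto simp: t_def)
  have "cquot g v (x, t) < z" using P(3)[OF Px b(2)[OF t(1,2)]] .
  moreover have "z < cquot g v (x, t)" using d(2)[of t] t by simp
  ultimately show False by simp
qed

lemma clarke_comp_le:
  fixes \<gamma> :: "'v::real_normed_vector \<Rightarrow>\<^sub>L 'x::real_normed_vector"
  shows "clarke_dd (\<lambda>z. g (\<gamma> z)) x v \<le> clarke_dd g (\<gamma> x) (\<gamma> v)"
proof -
  have lim: "filterlim (\<lambda>p. (\<gamma> (fst p), snd p)) (CF (\<gamma> x)) (CF x)"
  proof (rule filterlim_Pair)
    show "((\<lambda>p. \<gamma> (fst p)) \<longlongrightarrow> \<gamma> x) (CF x)"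
      by (rule bounded_linear.tendsto[OF blinfun.bounded_linear_right filterlim_fst])
    show "filterlim snd (at_right 0) (CF x)" by (rule filterlim_snd)
  qed
  have eq: "cquot (\<lambda>z. g (\<gamma> z)) v p = cquot g (\<gamma> v) (\<gamma> (fst p), snd p)" for p
    by (simp add: cquot_def blinfun.add_right blinfun.scaleR_right)
  show ?thesis
    unfolding clarke_dd_alt
  proof (rule Limsup_le_iff[THEN iffD2], intro allI impI)
    fix y assume "y > Limsup (CF (\<gamma> x)) (\<lambda>p. ereal (cquot g (\<gamma> v) p))"
    from Limsup_lessD[OF this] have "eventually (\<lambda>q. ereal (cquot g (\<gamma> v) q) < y) (CF (\<gamma> x))" .
    from filterlim_iff[THEN iffD1, OF lim, rule_format, OF this]
    show "eventually (\<lambda>p. y > ereal (cquot (\<lambda>z. g (\<gamma> z)) v p)) (CF x)"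
      by (simp add: eq)
  qed
qed

lemma clarke_sum:
  assumes "loc_lipschitz h" "eventually (\<lambda>p. cquot Lf v p = cquot h v p + r p) (CF x)" "(r \<longlongrightarrow> \<rho>) (CF x)"
  shows "clarke_dd Lf x v = clarke_dd h x v + ereal \<rho>"
proof -
  have hc: "clarke_dd h x v = ereal (cdd h x v)" by (rule clarke_dd_real[OF assms(1)])
  define c where "c = cdd h x v"
  have up: "clarke_dd Lf x v \<le> ereal (c + \<rho> + e)" if e: "e > 0" for e
  proof -
    have ev: "eventually (\<lambda>p. r p < \<rho> + e) (CF x)"
      using order_tendstoD(2)[OF assms(3)] e by simp
    have "clarke_dd Lf x v \<le> Limsup (CF x) (\<lambda>p. ereal (cquot h v p) + ereal (\<rho> + e))"
      unfolding clarke_dd_alt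
      by (rule Limsup_mono) (use ev assms(2) in \<open>eventually_elim, auto\<close>)
    also have "\<dots> = clarke_dd h x v + ereal (\<rho> + e)"
      unfolding clarke_dd_alt by (rule Limsup_add_ereal_right[OF CF_nontriv]) simp
    finally show ?thesis by (simp add: hc c_def add.assoc)
  qed
  have low: "ereal (c + \<rho> - e) \<le> clarke_dd Lf x v" if e: "e > 0" for e
  proof -
    have ev: "eventually (\<lambda>p. \<rho> - e < r p) (CF x)"
      using order_tendstoD(1)[OF assms(3)] e by simp
    have "clarke_dd h x v + ereal (\<rho> - e) = Limsup (CF x) (\<lambda>p. ereal (cquot h v p) + ereal (\<rho> - e))"
      unfolding clarke_dd_alt by (rule Limsup_add_ereal_right[OF CF_nontriv, symmetric]) simp
    also have "\<dots> \<le> clarke_dd Lf x v"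
      unfolding clarke_dd_alt
      by (rule Limsup_mono) (use ev assms(2) in \<open>eventually_elim, auto\<close>)
    finally show ?thesis by (simp add: hc c_def add_diff_eq)
  qed
  have "\<bar>clarke_dd Lf x v\<bar> \<noteq> \<infinity>" using up[of 1] low[of 1] by auto
  then obtain l where l: "clarke_dd Lf x v = ereal l" by (cases "clarke_dd Lf x v") auto
  have "l \<le> c + \<rho> + e" if "e > 0" for e using up[OF that] l by simp
  moreover have "c + \<rho> - e \<le> l" if "e > 0" for e using low[OF that] l by simp
  ultimately have "l = c + \<rho>"
  proof -
    assume a1: "\<And>e. e > 0 \<Longrightarrow> l \<le> c + \<rho> + e" and a2: "\<And>e. e > 0 \<Longrightarrow> c + \<rho> - e \<le> l"
    have "l \<le> c + \<rho>" by (rule field_le_epsilon) (use a1 in auto)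
    moreover have "c + \<rho> \<le> l" by (rule field_le_epsilon) (use a2 in force)
    ultimately show ?thesis by simp
  qed
  then show ?thesis using l hc c_def by simp
qed

lemma dini_mono:
  fixes F :: "real \<Rightarrow> real"
  assumes c: "c \<ge> 0" and cont: "continuous_on {0..c} F"
    and D: "\<And>t e. 0 \<le> t \<Longrightarrow> t < c \<Longrightarrow> e > 0 \<Longrightarrow> \<exists>\<delta>>0. \<forall>s. 0 < s \<and> s < \<delta> \<longrightarrow> F (t + s) - F t \<le> e * s"
  shows "F c \<le> F 0"
proof -
  have main: "F c - F 0 \<le> e * c" if e: "e > 0" for e
  proof -
    define S where "S = {t \<in> {0..c}. F t - F 0 \<le> e * t}"
    have S_eq: "S = {t \<in> {0..c}. F t \<le> e * t + F 0}" unfolding S_def by auto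
    have clS: "closed S" unfolding S_eq
      by (rule continuous_on_closed_Collect_le[OF cont]) (auto intro!: continuous_intros)
    have neS: "S \<noteq> {}" using c unfolding S_def by (auto intro!: exI[of _ 0])
    have bdS: "bdd_above S" unfolding S_def by (auto intro: bdd_aboveI[of _ c])
    define \<sigma> where "\<sigma> = Sup S"
    have sS: "\<sigma> \<in> S" unfolding \<sigma>_def by (rule closed_contains_Sup[OF neS bdS clS])
    have "\<sigma> = c"
    proof (rule ccontr)
      assume "\<sigma> \<noteq> c"
      with sS have s: "0 \<le> \<sigma>" "\<sigma> < c" "F \<sigma> - F 0 \<le> e * \<sigma>" unfolding S_def by auto
      obtain \<delta> where d: "\<delta> > 0" "\<And>s. 0 < s \<and> s < \<delta> \<Longrightarrow> F (\<sigma> + s) - F \<sigma> \<le> e * s"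
        using D[OF s(1,2) e] by blast
      define s where "s = min \<delta> (c - \<sigma>) / 2"
      have s1: "0 < s" "s < \<delta>" "\<sigma> + s \<le> c" using d s by (auto simp: s_def min_def field_simps)
      have "F (\<sigma> + s) - F 0 \<le> e * (\<sigma> + s)" using d(2)[of s] s1 s(3) by (simp add: algebra_simps)
      then have "\<sigma> + s \<in> S" using s1 s unfolding S_def by auto
      then have "\<sigma> + s \<le> \<sigma>" unfolding \<sigma>_def by (rule cSup_upper[OF _ bdS])
      then show False using s1 by simp
    qed
    then show ?thesis using sS unfolding S_def by auto
  qed
  show ?thesis
  proof (rule ccontr)
    assume "\<not> F c \<le> F 0"
    then have pos: "F c - F 0 > 0" by simp
    show False
    proof (cases "c = 0")
      case True then show False using pos by simp
    next
      case False
      then have "c > 0" using c by simp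
      have "F c - F 0 \<le> ((F c - F 0) / (2 * c)) * c" by (rule main) (use pos \<open>c > 0\<close> in simp)
      also have "\<dots> = (F c - F 0) / 2" using \<open>c > 0\<close> by simp
      finally show False using pos by simp
    qed
  qed
qed


lemma clarke_le_real:
  assumes "\<And>e. e > 0 \<Longrightarrow> eventually (\<lambda>p. cquot g v p < M + e) (CF x)"
  shows "clarke_dd g x v \<le> ereal M"
proof (rule ereal_le_epsilon2)
  fix e :: real assume e: "0 < e"
  have "clarke_dd g x v \<le> ereal (M + e)"
    unfolding clarke_dd_alt
    by (rule Limsup_bounded) (use assms[OF e] in \<open>eventually_elim, auto\<close>)
  then show "clarke_dd g x v \<le> ereal M + ereal e" by simp
qed

lemma clarke_upD_real:
  assumes "loc_lipschitz g" "e > 0"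
  shows "eventually (\<lambda>p. cquot g v p < cdd g x v + e) (CF x)"
  by (rule clarke_upD) (use clarke_dd_real[OF assms(1)] assms(2) in simp)

lemma CF_eventually_pos: "eventually (\<lambda>p. snd p > 0) (CF x)"
  unfolding eventually_prod_filter
  by (rule exI[of _ "\<lambda>_. True"], rule exI[of _ "\<lambda>t. t > 0"]) (auto simp: eventually_at_right_less)

lemma clarke_subadd:
  assumes g: "loc_lipschitz g"
  shows "cdd g x (v + w) \<le> cdd g x v + cdd g x w"
proof -
  have "clarke_dd g x (v + w) \<le> ereal (cdd g x v + cdd g x w)"
  proof (rule clarke_le_real)
    fix e :: real assume e: "e > 0"
    from clarke_upD_real[OF g, of "e/2" v x] e obtain Pf Pg where P: "eventually Pf (nhds x)" "eventually Pg (at_right 0)"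
      "\<And>y t. Pf y \<Longrightarrow> Pg t \<Longrightarrow> cquot g v (y, t) < cdd g x v + e/2"
      unfolding eventually_prod_filter by auto
    from clarke_upD_real[OF g, of "e/2" w x] e obtain Qf Qg where Q: "eventually Qf (nhds x)" "eventually Qg (at_right 0)"
      "\<And>y t. Qf y \<Longrightarrow> Qg t \<Longrightarrow> cquot g w (y, t) < cdd g x w + e/2"
      unfolding eventually_prod_filter by auto
    obtain d where d: "d > 0" "\<And>y. dist y x < d \<Longrightarrow> Qf y" using Q(1) unfolding eventually_nhds_metric by blast
    show "eventually (\<lambda>p. cquot g (v + w) p < cdd g x v + cdd g x w + e) (CF x)"
      unfolding eventually_prod_filter
    proof (intro exI conjI allI impI)
      have "eventually (\<lambda>y. dist y x < d/2) (nhds x)"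
        unfolding eventually_nhds_metric using d(1) by (intro exI[of _ "d/2"]) auto
      with P(1) show "eventually (\<lambda>y. Pf y \<and> dist y x < d/2) (nhds x)"
        by (rule eventually_conj)
      show "eventually (\<lambda>t. Pg t \<and> Qg t \<and> 0 < t \<and> t * norm v < d/2) (at_right 0)"
        using P(2) Q(2) at_right_small[of "d/2" "norm v"] d(1) by (auto intro: eventually_conj)
      fix y t assume y: "Pf y \<and> dist y x < d/2" and t: "Pg t \<and> Qg t \<and> 0 < t \<and> t * norm v < d/2"
      have "dist (y + t *\<^sub>R v) x \<le> dist y x + norm (t *\<^sub>R v)"
        by (metis dist_norm dist_triangle2 add_diff_cancel_left' dist_commute)
      also have "norm (t *\<^sub>R v) = t * norm v" using t by simp
      finally have "dist (y + t *\<^sub>R v) x < d" using y t by simp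
      then have q1: "cquot g w (y + t *\<^sub>R v, t) < cdd g x w + e/2" using Q(3) d(2) t by blast
      have q2: "cquot g v (y, t) < cdd g x v + e/2" using P(3) y t by blast
      have "cquot g (v + w) (y, t) = cquot g w (y + t *\<^sub>R v, t) + cquot g v (y, t)"
        using t by (simp add: cquot_def add_divide_distrib[symmetric] scaleR_add_right add.assoc)
      then show "cquot g (v + w) (y, t) < cdd g x v + cdd g x w + e" using q1 q2 by simp
    qed
  qed
  then show ?thesis using clarke_dd_real[OF g, of x "v + w"] by simp
qed

lemma clarke_poshom_le:
  assumes g: "loc_lipschitz g" and a: "a > 0"
  shows "cdd g x (a *\<^sub>R v) \<le> a * cdd g x v"
proof -
  have "clarke_dd g x (a *\<^sub>R v) \<le> ereal (a * cdd g x v)"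
  proof (rule clarke_le_real)
    fix e :: real assume e: "e > 0"
    from clarke_upD_real[OF g, of "e/a" v x] e a obtain Pf Pg where P: "eventually Pf (nhds x)" "eventually Pg (at_right 0)"
      "\<And>y t. Pf y \<Longrightarrow> Pg t \<Longrightarrow> cquot g v (y, t) < cdd g x v + e/a"
      unfolding eventually_prod_filter by auto
    obtain b where b: "b > 0" "\<And>t. 0 < t \<Longrightarrow> t < b \<Longrightarrow> Pg t"
      using P(2) unfolding eventually_at_right_field by auto
    show "eventually (\<lambda>p. cquot g (a *\<^sub>R v) p < a * cdd g x v + e) (CF x)"
      unfolding eventually_prod_filter
    proof (intro exI conjI allI impI)
      show "eventually Pf (nhds x)" by (rule P(1))
      show "eventually (\<lambda>t. 0 < t \<and> t * a < b) (at_right 0)" by (rule at_right_small[OF b(1)])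
      fix y t assume y: "Pf y" and t: "0 < t \<and> t * a < b"
      have "Pg (t * a)" using t a by (intro b(2)) auto
      then have q: "cquot g v (y, t * a) < cdd g x v + e/a" using P(3) y by blast
      have "cquot g (a *\<^sub>R v) (y, t) = a * cquot g v (y, t * a)"
        using t a by (simp add: cquot_def field_simps)
      also have "\<dots> < a * (cdd g x v + e/a)" using q a by simp
      also have "\<dots> = a * cdd g x v + e" using a by (simp add: field_simps)
      finally show "cquot g (a *\<^sub>R v) (y, t) < a * cdd g x v + e" .
    qed
  qed
  then show ?thesis using clarke_dd_real[OF g, of x "a *\<^sub>R v"] by simp
qed

lemma clarke_zero_dir:
  "cdd g x 0 = 0"
proof -
  have "clarke_dd g x 0 = Limsup (CF x) (\<lambda>p. ereal 0)"
    unfolding clarke_dd_alt by (simp add: cquot_def)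
  also have "\<dots> = 0" using Limsup_const[OF CF_nontriv] by (simp add: zero_ereal_def)
  finally show ?thesis by (simp add: cdd_def)
qed

lemma clarke_poshom:
  assumes g: "loc_lipschitz g" and a: "a \<ge> 0"
  shows "cdd g x (a *\<^sub>R v) = a * cdd g x v"
proof (cases "a = 0")
  case True then show ?thesis by (simp add: clarke_zero_dir)
next
  case False
  then have a: "a > 0" using a by simp
  have "cdd g x v = cdd g x ((1/a) *\<^sub>R (a *\<^sub>R v))" using a by simp
  also have "\<dots> \<le> (1/a) * cdd g x (a *\<^sub>R v)" by (rule clarke_poshom_le[OF g]) (use a in simp)
  finally have "a * cdd g x v \<le> cdd g x (a *\<^sub>R v)" using a by (simp add: field_simps)
  with clarke_poshom_le[OF g a, of x v] show ?thesis by linarith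
qed

lemma clarke_abs_bound:
  assumes "loc_lipschitz g"
  obtains K where "K \<ge> 0" "\<And>v. \<bar>cdd g x v\<bar> \<le> K * norm v"
proof -
  obtain K where K: "K \<ge> 0" "\<And>v. clarke_dd g x v \<le> ereal (K * norm v)"
    "\<And>v. ereal (- (K * norm v)) \<le> clarke_dd g x v"
    using clarke_bounds[OF assms] by blast
  show ?thesis
  proof (rule that[OF K(1)])
    fix v show "\<bar>cdd g x v\<bar> \<le> K * norm v"
      using K(2)[of v] K(3)[of v] clarke_dd_real[OF assms, of x v] by simp
  qed
qed

lemma loc_lipschitz_isCont:
  assumes "loc_lipschitz g"
  shows "isCont g x"
proof -
  obtain r L where rL: "r > 0" "L \<ge> 0" "L-lipschitz_on (ball x r) g"
    using loc_lipschitzE[OF assms] by blast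
  have "continuous_on (ball x r) g" by (rule lipschitz_on_continuous_on[OF rL(3)])
  then show ?thesis using rL(1) by (simp add: continuous_on_eq_continuous_at)
qed

section \<open>Hahn-Banach (dominated extension)\<close>

definition hb_good :: "('x::real_vector \<Rightarrow> real) \<Rightarrow> ('x \<times> real) set \<Rightarrow> bool" where
  "hb_good p G \<longleftrightarrow> (0, 0) \<in> G \<and> (\<forall>x a b. (x, a) \<in> G \<longrightarrow> (x, b) \<in> G \<longrightarrow> a = b)
     \<and> (\<forall>x a y b. (x, a) \<in> G \<longrightarrow> (y, b) \<in> G \<longrightarrow> (x + y, a + b) \<in> G)
     \<and> (\<forall>x a c. (x, a) \<in> G \<longrightarrow> (c *\<^sub>R x, c * a) \<in> G)
     \<and> (\<forall>x a. (x, a) \<in> G \<longrightarrow> a \<le> p x)"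

lemma hb_goodD:
  assumes "hb_good p G"
  shows hb0: "(0, 0) \<in> G" and hbf: "\<And>x a b. (x, a) \<in> G \<Longrightarrow> (x, b) \<in> G \<Longrightarrow> a = b"
    and hba: "\<And>x a z b. (x, a) \<in> G \<Longrightarrow> (z, b) \<in> G \<Longrightarrow> (x + z, a + b) \<in> G"
    and hbs: "\<And>x a c. (x, a) \<in> G \<Longrightarrow> (c *\<^sub>R x, c * a) \<in> G"
    and hbp: "\<And>x a. (x, a) \<in> G \<Longrightarrow> a \<le> p x"
  using assms unfolding hb_good_def by blast+

locale sublin =
  fixes p :: "'x::real_vector \<Rightarrow> real"
  assumes subadd: "\<And>x y. p (x + y) \<le> p x + p y"
    and poshom: "\<And>a x. a \<ge> 0 \<Longrightarrow> p (a *\<^sub>R x) = a * p x"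
begin

lemma hb_extend:
  assumes G: "hb_good p G" and y: "\<And>a. (y, a) \<notin> G"
  shows "\<exists>G'. hb_good p G' \<and> G \<subseteq> G' \<and> G' \<noteq> G"
proof -
  have G0: "(0, 0) \<in> G" and Gf: "\<And>x a b. (x, a) \<in> G \<Longrightarrow> (x, b) \<in> G \<Longrightarrow> a = b"
    and Ga: "\<And>x a z b. (x, a) \<in> G \<Longrightarrow> (z, b) \<in> G \<Longrightarrow> (x + z, a + b) \<in> G"
    and Gs: "\<And>x a c. (x, a) \<in> G \<Longrightarrow> (c *\<^sub>R x, c * a) \<in> G"
    and Gp: "\<And>x a. (x, a) \<in> G \<Longrightarrow> a \<le> p x"
    using G unfolding hb_good_def by blast+
  define T where "T = {a - p (m - y) | m a. (m, a) \<in> G}"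
  define c0 where "c0 = Sup T"
  have key: "a1 - p (m1 - y) \<le> p (m2 + y) - a2" if "(m1, a1) \<in> G" "(m2, a2) \<in> G" for m1 a1 m2 a2
  proof -
    have "a1 + a2 \<le> p (m1 + m2)" using Gp[OF Ga[OF that]] .
    also have "p (m1 + m2) = p ((m1 - y) + (m2 + y))" by (simp add: algebra_simps)
    also have "\<dots> \<le> p (m1 - y) + p (m2 + y)" by (rule subadd)
    finally show ?thesis by simp
  qed
  have Tne: "T \<noteq> {}" using G0 unfolding T_def by blast
  have Tbd: "bdd_above T"
  proof (rule bdd_aboveI[of _ "p (0 + y) - 0"])
    fix x assume "x \<in> T"
    then obtain m a where "x = a - p (m - y)" "(m, a) \<in> G" unfolding T_def by blast
    then show "x \<le> p (0 + y) - 0" using key[OF _ G0] by blast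
  qed
  have c_up: "c0 \<le> p (m + y) - a" if "(m, a) \<in> G" for m a
    unfolding c0_def
  proof (rule cSup_least[OF Tne])
    fix x assume "x \<in> T"
    then obtain m' a' where "x = a' - p (m' - y)" "(m', a') \<in> G" unfolding T_def by blast
    then show "x \<le> p (m + y) - a" using key[OF _ that] by blast
  qed
  have c_low: "a - p (m - y) \<le> c0" if "(m, a) \<in> G" for m a
    unfolding c0_def by (rule cSup_upper[OF _ Tbd]) (unfold T_def, use that in blast)
  define G' where "G' = {(m + t *\<^sub>R y, a + t * c0) | m a t. (m, a) \<in> G}"
  have Gneg: "(m1 - m2, a1 - a2) \<in> G" if "(m1, a1) \<in> G" "(m2, a2) \<in> G" for m1 a1 m2 a2
    using Ga[OF that(1) Gs[OF that(2), of "-1"]] by simp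
  have good': "hb_good p G'"
    unfolding hb_good_def
  proof (intro conjI allI impI)
    show "(0, 0) \<in> G'" unfolding G'_def using G0 by (auto intro!: exI[of _ 0])
  next
    fix x a b assume "(x, a) \<in> G'" "(x, b) \<in> G'"
    then obtain m1 a1 t1 m2 a2 t2 where m: "(m1, a1) \<in> G" "(m2, a2) \<in> G"
      "x = m1 + t1 *\<^sub>R y" "a = a1 + t1 * c0" "x = m2 + t2 *\<^sub>R y" "b = a2 + t2 * c0"
      unfolding G'_def by blast
    have "t1 = t2"
    proof (rule ccontr)
      assume ne: "t1 \<noteq> t2"
      have "(m1 - m2) = (t2 - t1) *\<^sub>R y" using m(3,5) by (simp add: algebra_simps)
      then have yeq: "y = (1 / (t2 - t1)) *\<^sub>R (m1 - m2)" using ne by simp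
      have "(y, (1 / (t2 - t1)) * (a1 - a2)) \<in> G" unfolding yeq by (rule Gs[OF Gneg[OF m(1,2)]])
      then show False using y by blast
    qed
    then have "m1 = m2" using m by simp
    then have "a1 = a2" using Gf m by blast
    then show "a = b" using m \<open>t1 = t2\<close> by simp
  next
    fix x a z b assume "(x, a) \<in> G'" "(z, b) \<in> G'"
    then obtain m1 a1 t1 m2 a2 t2 where m: "(m1, a1) \<in> G" "(m2, a2) \<in> G"
      "x = m1 + t1 *\<^sub>R y" "a = a1 + t1 * c0" "z = m2 + t2 *\<^sub>R y" "b = a2 + t2 * c0"
      unfolding G'_def by blast
    have e: "x + z = (m1 + m2) + (t1 + t2) *\<^sub>R y" "a + b = (a1 + a2) + (t1 + t2) * c0"
      by (simp_all add: m algebra_simps)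
    show "(x + z, a + b) \<in> G'" unfolding G'_def e using Ga[OF m(1,2)] by blast
  next
    fix x a c assume "(x, a) \<in> G'"
    then obtain m1 a1 t1 where m: "(m1, a1) \<in> G" "x = m1 + t1 *\<^sub>R y" "a = a1 + t1 * c0"
      unfolding G'_def by blast
    have e: "c *\<^sub>R x = c *\<^sub>R m1 + (c * t1) *\<^sub>R y" "c * a = c * a1 + (c * t1) * c0"
      by (simp_all add: m algebra_simps)
    show "(c *\<^sub>R x, c * a) \<in> G'" unfolding G'_def e using Gs[OF m(1)] by blast
  next
    fix x a assume "(x, a) \<in> G'"
    then obtain m a1 t where m: "(m, a1) \<in> G" "x = m + t *\<^sub>R y" "a = a1 + t * c0"
      unfolding G'_def by blast
    consider "t > 0" | "t = 0" | "t < 0" by linarith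
    then show "a \<le> p x"
    proof cases
      case 1
      have "(m /\<^sub>R t, a1 / t) \<in> G" using Gs[OF m(1), of "1/t"] by (simp add: divide_inverse mult.commute)
      from c_up[OF this] have "c0 \<le> p (m /\<^sub>R t + y) - a1 / t" .
      then have "t * c0 \<le> t * (p (m /\<^sub>R t + y) - a1 / t)" using 1 by (intro mult_left_mono) auto
      also have "\<dots> = t * p (m /\<^sub>R t + y) - a1" using 1 by (simp add: right_diff_distrib)
      finally have h1: "t * c0 \<le> t * p (m /\<^sub>R t + y) - a1" .
      have h3: "t *\<^sub>R (m /\<^sub>R t + y) = x" using 1 m(2) by (simp add: algebra_simps)
      have h2: "t * p (m /\<^sub>R t + y) = p x" using 1 poshom[of t "m /\<^sub>R t + y"] h3 by simp
      show ?thesis using h1 h2 m(3) by (simp add: algebra_simps)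
    next
      case 2 then show ?thesis using m Gp by simp
    next
      case 3
      define s where "s = - t"
      have s: "s > 0" using 3 by (simp add: s_def)
      have "(m /\<^sub>R s, a1 / s) \<in> G" using Gs[OF m(1), of "1/s"] by (simp add: divide_inverse mult.commute)
      from c_low[OF this] have "s * (a1 / s - p (m /\<^sub>R s - y)) \<le> s * c0" using s by simp
      moreover have "s * p (m /\<^sub>R s - y) = p (s *\<^sub>R (m /\<^sub>R s - y))" using s by (simp add: poshom)
      moreover have "s *\<^sub>R (m /\<^sub>R s - y) = x" using s m(2) by (simp add: algebra_simps s_def)
      ultimately show ?thesis using s m(3) by (simp add: algebra_simps s_def)
    qed
  qed
  have sub: "G \<subseteq> G'"
  proof
    fix z assume z: "z \<in> G"
    obtain m a where za: "z = (m, a)" by (cases z)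
    show "z \<in> G'" unfolding G'_def
      by (rule CollectI, rule exI[of _ m], rule exI[of _ a], rule exI[of _ 0]) (use z za in simp)
  qed
  have "(y, c0) = (0 + 1 *\<^sub>R y, 0 + 1 * c0)" by simp
  then have "(y, c0) \<in> G'" unfolding G'_def using G0 by blast
  then have "G' \<noteq> G" using y by blast
  with good' sub show ?thesis by blast
qed

lemma hahn_banach:
  assumes B: "hb_good p B"
  shows "\<exists>\<xi>. linear \<xi> \<and> (\<forall>x. \<xi> x \<le> p x) \<and> (\<forall>x a. (x, a) \<in> B \<longrightarrow> \<xi> x = a)"
proof -
  define \<A> where "\<A> = {G. hb_good p G \<and> B \<subseteq> G}"
  have "\<exists>M\<in>\<A>. \<forall>X\<in>\<A>. M \<subseteq> X \<longrightarrow> X = M"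
  proof (rule Zorn_Lemma2, intro ballI)
    fix C assume C: "C \<in> chains \<A>"
    show "\<exists>U\<in>\<A>. \<forall>X\<in>C. X \<subseteq> U"
    proof (cases "C = {}")
      case True then show ?thesis using B unfolding \<A>_def by auto
    next
      case False
      have CA: "C \<subseteq> \<A>" using C by (rule chainsD2)
      have cmp: "X \<subseteq> Y \<or> Y \<subseteq> X" if "X \<in> C" "Y \<in> C" for X Y using chainsD[OF C that] .
      have two: "\<exists>Z\<in>C. X \<subseteq> Z \<and> Y \<subseteq> Z" if "X \<in> C" "Y \<in> C" for X Y
        using cmp[OF that] that by blast
      have gd: "hb_good p Z" if "Z \<in> C" for Z using CA that unfolding \<A>_def by auto
      have "hb_good p (\<Union>C)"
        unfolding hb_good_def
      proof (intro conjI allI impI)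
        obtain Z where "Z \<in> C" using False by blast
        then show "(0, 0) \<in> \<Union>C" using hb0[OF gd[of Z]] by blast
      next
        fix x a b assume "(x, a) \<in> \<Union>C" "(x, b) \<in> \<Union>C"
        then obtain X Y where "X \<in> C" "Y \<in> C" "(x, a) \<in> X" "(x, b) \<in> Y" by blast
        then obtain Z where "Z \<in> C" "(x, a) \<in> Z" "(x, b) \<in> Z" using two by blast
        then show "a = b" using hbf[OF gd[of Z]] by blast
      next
        fix x a z b assume "(x, a) \<in> \<Union>C" "(z, b) \<in> \<Union>C"
        then obtain X Y where "X \<in> C" "Y \<in> C" "(x, a) \<in> X" "(z, b) \<in> Y" by blast
        then obtain Z where "Z \<in> C" "(x, a) \<in> Z" "(z, b) \<in> Z" using two by blast
        then show "(x + z, a + b) \<in> \<Union>C" using hba[OF gd[of Z]] by blast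
      next
        fix x a c assume "(x, a) \<in> \<Union>C"
        then obtain Z where "Z \<in> C" "(x, a) \<in> Z" by blast
        then show "(c *\<^sub>R x, c * a) \<in> \<Union>C" using hbs[OF gd[of Z]] by blast
      next
        fix x a assume "(x, a) \<in> \<Union>C"
        then obtain Z where "Z \<in> C" "(x, a) \<in> Z" by blast
        then show "a \<le> p x" using hbp[OF gd[of Z]] by blast
      qed
      moreover have "B \<subseteq> \<Union>C" using False CA unfolding \<A>_def by blast
      ultimately show ?thesis unfolding \<A>_def by blast
    qed
  qed
  then obtain M where MA: "M \<in> \<A>" and MX: "\<forall>X\<in>\<A>. M \<subseteq> X \<longrightarrow> X = M" by (rule bexE)
  have M: "hb_good p M" "B \<subseteq> M" using MA unfolding \<A>_def by simp_all
  have Mmax: "X = M" if "hb_good p X" "B \<subseteq> X" "M \<subseteq> X" for X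
    using MX that unfolding \<A>_def by simp
  have tot: "\<exists>a. (x, a) \<in> M" for x
  proof (rule ccontr)
    assume "\<not> (\<exists>a. (x, a) \<in> M)"
    then have "\<And>a. (x, a) \<notin> M" by simp
    from hb_extend[OF M(1) this] obtain G' where G': "hb_good p G'" "M \<subseteq> G'" "G' \<noteq> M" by (elim exE conjE)
    have "B \<subseteq> G'" using M(2) G'(2) by (rule subset_trans)
    from Mmax[OF G'(1) this G'(2)] G'(3) show False by simp
  qed
  have Mf: "\<And>x a b. (x, a) \<in> M \<Longrightarrow> (x, b) \<in> M \<Longrightarrow> a = b"
    and Ma: "\<And>x a z b. (x, a) \<in> M \<Longrightarrow> (z, b) \<in> M \<Longrightarrow> (x + z, a + b) \<in> M"
    and Ms: "\<And>x a c. (x, a) \<in> M \<Longrightarrow> (c *\<^sub>R x, c * a) \<in> M"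
    and Mp: "\<And>x a. (x, a) \<in> M \<Longrightarrow> a \<le> p x"
    using hb_goodD[OF M(1)] by blast+
  define \<xi> where "\<xi> x = (THE a. (x, a) \<in> M)" for x
  have xiM: "(x, \<xi> x) \<in> M" for x
  proof -
    have "\<exists>!a. (x, a) \<in> M" using tot[of x] Mf by blast
    then show ?thesis unfolding \<xi>_def by (rule theI')
  qed
  have xi_eq: "\<xi> x = a" if "(x, a) \<in> M" for x a using Mf[OF xiM that] .
  have "linear \<xi>"
  proof (rule linearI)
    show "\<xi> (x + z) = \<xi> x + \<xi> z" for x z by (rule xi_eq[OF Ma[OF xiM xiM]])
    show "\<xi> (c *\<^sub>R x) = c *\<^sub>R \<xi> x" for c x using xi_eq[OF Ms[OF xiM]] by simp
  qed
  moreover have "\<forall>x. \<xi> x \<le> p x" using Mp xiM by blast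
  moreover have "\<forall>x a. (x, a) \<in> B \<longrightarrow> \<xi> x = a" using M(2) xi_eq by blast
  ultimately show ?thesis by blast
qed

end



lemma cont_line:
  assumes "loc_lipschitz g" "continuous_on S p"
  shows "continuous_on S (\<lambda>t. g (p t))"
proof -
  have gc: "continuous_on UNIV g"
    using loc_lipschitz_isCont[OF assms(1)] by (simp add: continuous_at_imp_continuous_on)
  show ?thesis by (rule continuous_on_compose2[OF gc assms(2)]) auto
qed

lemma mid_ineq:
  fixes g :: "'a::real_normed_vector \<Rightarrow> real"
  assumes g: "loc_lipschitz g" and m: "m \<ge> 0"
    and rel: "\<And>x y. cdd g x (y - x) + cdd g y (x - y) \<le> m * (norm (x - y))\<^sup>2"
  shows "2 * g ((1/2) *\<^sub>R (x + y)) \<le> g x + g y + m * (norm (x - y))\<^sup>2 / 4"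
proof -
  define d where "d = y - x"
  define N where "N = (norm d)\<^sup>2"
  have N: "N \<ge> 0" by (simp add: N_def)
  define F where "F t = g (x + t *\<^sub>R d) + g (x + (1 - t) *\<^sub>R d) - m * N * (t - t\<^sup>2)" for t
  have Fc: "continuous_on {0..1/2} F"
    unfolding F_def by (intro cont_line[OF g] continuous_intros)
  have "F (1/2) \<le> F 0"
  proof (rule dini_mono[OF _ Fc])
    fix t e :: real assume t: "0 \<le> t" "t < 1/2" and e: "e > 0"
    define z1 where "z1 = x + t *\<^sub>R d"
    define z2 where "z2 = x + (1 - t) *\<^sub>R d"
    define l where "l = 1 - 2 * t"
    have l: "l > 0" using t by (simp add: l_def)
    have ll: "l = (1 - t) - t" unfolding l_def by simp
    have z21: "z2 - z1 = l *\<^sub>R d"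
    proof -
      have "z2 - z1 = (1 - t) *\<^sub>R d - t *\<^sub>R d" unfolding z1_def z2_def by simp
      also have "\<dots> = ((1 - t) - t) *\<^sub>R d" by (rule scaleR_diff_left[symmetric])
      finally show ?thesis unfolding ll .
    qed
    have z12: "z1 - z2 = l *\<^sub>R (- d)" using z21 by (metis minus_diff_eq scaleR_minus_right)
    define a1 where "a1 = cdd g z1 (l *\<^sub>R d)"
    define a2 where "a2 = cdd g z2 (l *\<^sub>R (- d))"
    have "a1 + a2 \<le> m * (norm (z1 - z2))\<^sup>2" using rel[of z1 z2] unfolding a1_def a2_def z21 z12 .
    also have "(norm (z1 - z2))\<^sup>2 = l\<^sup>2 * N" unfolding z12 N_def using l by (simp add: power_mult_distrib)
    finally have a12: "a1 + a2 \<le> m * (l\<^sup>2 * N)" .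
    have "a1 / l + a2 / l \<le> m * l * N"
    proof -
      have "a1 / l + a2 / l = (a1 + a2) / l" by (simp add: add_divide_distrib)
      also have "\<dots> \<le> (m * (l\<^sup>2 * N)) / l" using a12 l by (simp add: divide_right_mono)
      also have "\<dots> = m * l * N" using l by (simp add: power2_eq_square)
      finally show ?thesis .
    qed
    note a12' = this
    obtain \<delta>1 where d1: "\<delta>1 > 0" "\<And>s. 0 < s \<and> s < \<delta>1 \<Longrightarrow> (g (z1 + s *\<^sub>R d) - g z1) / s < a1 / l + e/3"
      using dini_upper[of g z1 l d a1 "e/3"] clarke_dd_real[OF g] l e unfolding a1_def by auto
    obtain \<delta>2 where d2: "\<delta>2 > 0" "\<And>s. 0 < s \<and> s < \<delta>2 \<Longrightarrow> (g (z2 + s *\<^sub>R (- d)) - g z2) / s < a2 / l + e/3"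
      using dini_upper[of g z2 l "- d" a2 "e/3"] clarke_dd_real[OF g] l e unfolding a2_def by auto
    define \<delta> where "\<delta> = min (min \<delta>1 \<delta>2) (e / (3 * (m * N + 1)))"
    have mN3: "3 * (m * N + 1) > 0" using m N by (simp add: add_nonneg_pos)
    have dp: "\<delta> > 0" using d1 d2 e mN3 by (simp add: \<delta>_def)
    show "\<exists>\<delta>>0. \<forall>s. 0 < s \<and> s < \<delta> \<longrightarrow> F (t + s) - F t \<le> e * s"
    proof (intro exI[of _ \<delta>] conjI dp allI impI)
      fix s assume s: "0 < s \<and> s < \<delta>"
      have q1: "g (z1 + s *\<^sub>R d) - g z1 < s * (a1 / l + e/3)"
        using d1(2)[of s] s by (simp add: \<delta>_def pos_divide_less_eq mult.commute)
      have q2: "g (z2 + s *\<^sub>R (- d)) - g z2 < s * (a2 / l + e/3)"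
        using d2(2)[of s] s by (simp add: \<delta>_def pos_divide_less_eq mult.commute)
      have p1: "x + (t + s) *\<^sub>R d = z1 + s *\<^sub>R d" unfolding z1_def by (simp add: algebra_simps)
      have p2: "x + (1 - (t + s)) *\<^sub>R d = z2 + s *\<^sub>R (- d)" unfolding z2_def by (simp add: algebra_simps)
      have Fd: "F (t + s) - F t = (g (z1 + s *\<^sub>R d) - g z1) + (g (z2 + s *\<^sub>R (- d)) - g z2) - m * N * (s * (l - s))"
        unfolding F_def p1 p2 z1_def[symmetric] z2_def[symmetric] l_def by (simp add: power2_eq_square algebra_simps)
      have "s * (a1 / l + e/3) + s * (a2 / l + e/3) = s * (a1 / l + a2 / l) + 2 * (s * e) / 3"
        by (simp add: algebra_simps)
      also have "s * (a1 / l + a2 / l) \<le> s * (m * l * N)" using a12' s by (intro mult_left_mono) auto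
      finally have b1: "s * (a1 / l + e/3) + s * (a2 / l + e/3) \<le> s * (m * l * N) + 2 * (s * e) / 3" by simp
      have "s < e / (3 * (m * N + 1))" using s by (simp add: \<delta>_def)
      then have "s * (3 * (m * N + 1)) < e" using mN3 by (simp add: pos_less_divide_eq)
      then have "s * (m * N + 1) < e / 3" by (simp add: algebra_simps)
      then have "s * (m * N) \<le> e / 3" using s by (simp add: distrib_left)
      then have b2: "s * (s * (m * N)) \<le> s * (e / 3)" using s by (intro mult_left_mono) auto
      have "F (t + s) - F t < s * (m * l * N) + 2 * (s * e) / 3 - m * N * (s * (l - s))"
        using Fd q1 q2 b1 by linarith
      also have "\<dots> = 2 * (s * e) / 3 + s * (s * (m * N))" by (simp add: algebra_simps)
      also have "\<dots> \<le> e * s" using b2 by (simp add: algebra_simps)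
      finally show "F (t + s) - F t \<le> e * s" by simp
    qed
  qed simp
  moreover have "x + (1/2) *\<^sub>R d = (1/2) *\<^sub>R (x + y)"
  proof -
    have "x + (1/2) *\<^sub>R d = (x - (1/2) *\<^sub>R x) + (1/2) *\<^sub>R y" unfolding d_def by (simp add: algebra_simps)
    also have "x - (1/2) *\<^sub>R x = (1 - 1/2) *\<^sub>R x" by (metis scaleR_diff_left scaleR_one)
    also have "(1 - 1/2::real) = 1/2" by simp
    finally show ?thesis by (simp add: scaleR_add_right)
  qed
  moreover have "x + 1 *\<^sub>R d = y" unfolding d_def by simp
  moreover have "N = (norm (x - y))\<^sup>2" unfolding N_def d_def by (simp add: norm_minus_commute)
  ultimately show ?thesis unfolding F_def by (simp add: power2_eq_square algebra_simps)
qed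

lemma low_ineq:
  fixes g :: "'a::real_normed_vector \<Rightarrow> real"
  assumes g: "loc_lipschitz g" and m: "m \<ge> 0"
    and rel: "\<And>x y. cdd g x (y - x) + cdd g y (x - y) \<le> m * (norm (x - y))\<^sup>2"
    and K: "\<And>z. - (K * norm z) \<le> cdd g 0 z"
  shows "g 0 - g v \<le> m * (norm v)\<^sup>2 / 2 + K * norm v"
proof -
  define N where "N = (norm v)\<^sup>2"
  have N: "N \<ge> 0" by (simp add: N_def)
  define F where "F s = g ((1 - s) *\<^sub>R v) - (m * N * (s - s\<^sup>2 / 2) + K * norm v * s)" for s
  have Fc: "continuous_on {0..1} F"
    unfolding F_def by (intro cont_line[OF g] continuous_intros) auto
  have "F 1 \<le> F 0"
  proof (rule dini_mono[OF _ Fc])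
    fix s e :: real assume s: "0 \<le> s" "s < 1" and e: "e > 0"
    define z where "z = (1 - s) *\<^sub>R v"
    define l where "l = 1 - s"
    have l: "l > 0" using s by (simp add: l_def)
    have z0: "0 - z = l *\<^sub>R (- v)" unfolding z_def l_def by simp
    define a where "a = cdd g z (l *\<^sub>R (- v))"
    have "a + cdd g 0 (z - 0) \<le> m * (norm (z - 0))\<^sup>2" using rel[of z 0] unfolding a_def z0 .
    moreover have "norm z = l * norm v" unfolding z_def l_def using l by (simp add: l_def)
    moreover have "- (K * norm z) \<le> cdd g 0 (z - 0)" using K[of z] by simp
    ultimately have "a \<le> m * (l\<^sup>2 * N) + K * (l * norm v)"
      unfolding N_def by (simp add: power_mult_distrib)
    then have al: "a / l \<le> m * l * N + K * norm v"
      using l by (simp add: divide_le_eq power2_eq_square algebra_simps)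
    obtain \<delta>1 where d1: "\<delta>1 > 0" "\<And>\<sigma>. 0 < \<sigma> \<and> \<sigma> < \<delta>1 \<Longrightarrow> (g (z + \<sigma> *\<^sub>R (- v)) - g z) / \<sigma> < a / l + e/2"
      using dini_upper[of g z l "- v" a "e/2"] clarke_dd_real[OF g] l e unfolding a_def by auto
    define \<delta> where "\<delta> = min \<delta>1 (e / (m * N + 1))"
    have dp: "\<delta> > 0" using d1 e m N by (simp add: \<delta>_def add_nonneg_pos)
    show "\<exists>\<delta>>0. \<forall>\<sigma>. 0 < \<sigma> \<and> \<sigma> < \<delta> \<longrightarrow> F (s + \<sigma>) - F s \<le> e * \<sigma>"
    proof (intro exI[of _ \<delta>] conjI dp allI impI)
      fix \<sigma> assume sg: "0 < \<sigma> \<and> \<sigma> < \<delta>"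
      have q: "g (z + \<sigma> *\<^sub>R (- v)) - g z < \<sigma> * (a / l + e/2)"
        using d1(2)[of \<sigma>] sg by (simp add: \<delta>_def pos_divide_less_eq mult.commute)
      have p1: "(1 - (s + \<sigma>)) *\<^sub>R v = z + \<sigma> *\<^sub>R (- v)" unfolding z_def by (simp add: algebra_simps)
      have Fd: "F (s + \<sigma>) - F s = (g (z + \<sigma> *\<^sub>R (- v)) - g z) - (m * N * (\<sigma> * (l - \<sigma> / 2)) + K * norm v * \<sigma>)"
        unfolding F_def p1 z_def[symmetric] l_def by (simp add: power2_eq_square algebra_simps)
      have b1: "\<sigma> * (a / l + e/2) \<le> \<sigma> * (m * l * N + K * norm v) + \<sigma> * e / 2"
      proof -
        have "\<sigma> * (a / l) \<le> \<sigma> * (m * l * N + K * norm v)" using al sg by (intro mult_left_mono) auto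
        then show ?thesis by (simp add: distrib_left)
      qed
      have mN1: "m * N + 1 > 0" using m N by (simp add: add_nonneg_pos)
      have "\<sigma> < e / (m * N + 1)" using sg by (simp add: \<delta>_def)
      then have "\<sigma> * (m * N + 1) < e" using mN1 by (simp add: pos_less_divide_eq)
      then have "\<sigma> * (m * N) \<le> e" using sg by (simp add: distrib_left)
      then have b2: "\<sigma> * (\<sigma> * (m * N)) \<le> \<sigma> * e" using sg by (intro mult_left_mono) auto
      have "F (s + \<sigma>) - F s < \<sigma> * (m * l * N + K * norm v) + \<sigma> * e / 2 - (m * N * (\<sigma> * (l - \<sigma> / 2)) + K * norm v * \<sigma>)"
        using Fd q b1 by linarith
      also have "\<dots> = \<sigma> * e / 2 + \<sigma> * (\<sigma> * (m * N)) / 2" by (simp add: algebra_simps)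
      also have "\<dots> \<le> e * \<sigma>" using b2 by (simp add: algebra_simps)
      finally show "F (s + \<sigma>) - F s \<le> e * \<sigma>" by simp
    qed
  qed simp
  then show ?thesis unfolding F_def N_def by (simp add: power2_eq_square algebra_simps)
qed

locale setting =
  fixes A :: "'v::banach \<Rightarrow> ('v \<Rightarrow>\<^sub>L real)" and J :: "'x::banach \<Rightarrow> 'x \<Rightarrow> real"
    and \<gamma> :: "'v \<Rightarrow>\<^sub>L 'x" and mA ma mL :: real and f :: "'v \<Rightarrow>\<^sub>L real"
  assumes A1: "bounded_linear A"
    and A2: "\<And>u v. blinfun_apply (A u) v = blinfun_apply (A v) u"
    and A3: "mA > 0" "\<And>u. blinfun_apply (A u) u \<ge> mA * (norm u)\<^sup>2"
    and J1: "\<And>w. loc_lipschitz (J w)"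
    and J3: "ma \<ge> 0" "mL \<ge> 0"
      "\<And>w1 w2 v1 v2. clarke_dd (J w1) v1 (v2 - v1) + clarke_dd (J w2) v2 (v1 - v2)
          \<le> ereal (ma * (norm (v1 - v2))\<^sup>2 + mL * norm (w1 - w2) * norm (v1 - v2))"
    and S: "mA > (ma + mL) * (norm \<gamma>)\<^sup>2"
begin

definition Af where "Af u v = blinfun_apply (A u) v"
definition hw where "hw w z = J (\<gamma> w) (\<gamma> z)"
definition Phi where "Phi w v = 1/2 * Af v v - blinfun_apply f v + hw w v"
definition SolP where "SolP w x \<longleftrightarrow> (\<forall>v. ereal (blinfun_apply f v - Af x v) \<le> clarke_dd (hw w) x v)"
definition SolX where "SolX x \<longleftrightarrow> (\<forall>v. ereal (blinfun_apply f v - Af x v) \<le> clarke_dd (J (\<gamma> x)) (\<gamma> x) (\<gamma> v))"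

lemma Af_add_left: "Af (x + y) z = Af x z + Af y z"
  unfolding Af_def by (simp add: A1 linear_simps blinfun.add_left)
lemma Af_diff_left: "Af (x - y) z = Af x z - Af y z"
  unfolding Af_def by (simp add: A1 linear_simps blinfun.diff_left)
lemma Af_scale_left: "Af (c *\<^sub>R x) z = c * Af x z"
  unfolding Af_def by (simp add: A1 linear_simps blinfun.scaleR_left)
lemma Af_minus_left: "Af (- x) z = - Af x z"
  unfolding Af_def by (simp add: A1 linear_simps blinfun.minus_left)
lemma Af_add_right: "Af x (y + z) = Af x y + Af x z"
  unfolding Af_def by (simp add: blinfun.add_right)
lemma Af_diff_right: "Af x (y - z) = Af x y - Af x z"
  unfolding Af_def by (simp add: blinfun.diff_right)
lemma Af_scale_right: "Af x (c *\<^sub>R y) = c * Af x y"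
  unfolding Af_def by (simp add: blinfun.scaleR_right)
lemma Af_minus_right: "Af x (- y) = - Af x y"
  unfolding Af_def by (simp add: blinfun.minus_right)
lemma Af_zero_left: "Af 0 z = 0"
  using Af_scale_left[of 0 0 z] by simp
lemma Af_zero_right: "Af x 0 = 0"
  unfolding Af_def by simp
lemmas Af_simps = Af_add_left Af_diff_left Af_scale_left Af_minus_left Af_add_right Af_diff_right
  Af_scale_right Af_minus_right Af_zero_left Af_zero_right
lemma Af_sym: "Af u v = Af v u" unfolding Af_def by (rule A2)
lemma Af_coer: "Af u u \<ge> mA * (norm u)\<^sup>2" unfolding Af_def by (rule A3(2))

lemma f_simps: "blinfun_apply f (x + y) = blinfun_apply f x + blinfun_apply f y"
  "blinfun_apply f (x - y) = blinfun_apply f x - blinfun_apply f y"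
  "blinfun_apply f (c *\<^sub>R x) = c * blinfun_apply f x"
  "blinfun_apply f (- x) = - blinfun_apply f x"
  by (simp_all add: blinfun.add_right blinfun.diff_right blinfun.scaleR_right blinfun.minus_right)

lemma gamma_norm: "norm (blinfun_apply \<gamma> x) \<le> norm \<gamma> * norm x"
  by (rule norm_blinfun)

lemma hw_lip: "loc_lipschitz (hw w)"
  unfolding loc_lipschitz_def
proof
  fix x
  obtain r L where rL: "r > 0" "L \<ge> 0" "L-lipschitz_on (ball (\<gamma> x) r) (J (\<gamma> w))"
    using loc_lipschitzE[OF J1] by blast
  define n where "n = norm \<gamma>"
  have n: "n \<ge> 0" by (simp add: n_def)
  have "(L * n)-lipschitz_on (ball x (r / (n + 1))) (hw w)"
  proof (rule lipschitz_onI)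
    have inb: "\<gamma> y \<in> ball (\<gamma> x) r" if "y \<in> ball x (r / (n + 1))" for y
    proof -
      have "dist (\<gamma> x) (\<gamma> y) = norm (\<gamma> (x - y))" by (simp add: dist_norm blinfun.diff_right)
      also have "\<dots> \<le> n * norm (x - y)" unfolding n_def by (rule gamma_norm)
      also have "\<dots> \<le> n * (r / (n + 1))" using that n by (intro mult_left_mono) (auto simp: dist_norm)
      also have "\<dots> < r" using n rL(1) by (simp add: field_simps)
      finally show ?thesis by simp
    qed
    fix y z assume y: "y \<in> ball x (r / (n + 1))" and z: "z \<in> ball x (r / (n + 1))"
    have "dist (hw w y) (hw w z) \<le> L * dist (\<gamma> y) (\<gamma> z)"
      unfolding hw_def by (rule lipschitz_onD[OF rL(3) inb[OF y] inb[OF z]])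
    also have "dist (\<gamma> y) (\<gamma> z) \<le> n * dist y z"
      unfolding dist_norm n_def blinfun.diff_right[symmetric] by (rule gamma_norm)
    finally show "dist (hw w y) (hw w z) \<le> L * n * dist y z"
      using rL(2) by (smt (verit) mult.assoc mult_left_mono)
  next
    show "0 \<le> L * n" using rL(2) n by simp
  qed
  then show "\<exists>r>0. \<exists>L. L-lipschitz_on (ball x r) (hw w)" using rL(1) n
    by (intro exI[of _ "r / (n + 1)"] conjI exI[of _ "L * n"]) auto
qed

lemma hw_comp: "clarke_dd (hw w) x v \<le> clarke_dd (J (\<gamma> w)) (\<gamma> x) (\<gamma> v)"
  unfolding hw_def[abs_def] by (rule clarke_comp_le)

lemma core:
  assumes "ereal (blinfun_apply f (x2 - x1) - Af x1 (x2 - x1)) \<le> clarke_dd (J w1) (\<gamma> x1) (\<gamma> x2 - \<gamma> x1)"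
    and "ereal (blinfun_apply f (x1 - x2) - Af x2 (x1 - x2)) \<le> clarke_dd (J w2) (\<gamma> x2) (\<gamma> x1 - \<gamma> x2)"
  shows "mA * (norm (x1 - x2))\<^sup>2 \<le> ma * (norm \<gamma>)\<^sup>2 * (norm (x1 - x2))\<^sup>2 + mL * norm (w1 - w2) * (norm \<gamma> * norm (x1 - x2))"
proof -
  have "ereal (blinfun_apply f (x2 - x1) - Af x1 (x2 - x1)) + ereal (blinfun_apply f (x1 - x2) - Af x2 (x1 - x2))
      \<le> clarke_dd (J w1) (\<gamma> x1) (\<gamma> x2 - \<gamma> x1) + clarke_dd (J w2) (\<gamma> x2) (\<gamma> x1 - \<gamma> x2)"
    by (rule add_mono[OF assms])
  also have "\<dots> \<le> ereal (ma * (norm (\<gamma> x1 - \<gamma> x2))\<^sup>2 + mL * norm (w1 - w2) * norm (\<gamma> x1 - \<gamma> x2))"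
    by (rule J3(3))
  finally have "Af (x1 - x2) (x1 - x2) \<le> ma * (norm (\<gamma> x1 - \<gamma> x2))\<^sup>2 + mL * norm (w1 - w2) * norm (\<gamma> x1 - \<gamma> x2)"
    by (simp add: Af_simps f_simps algebra_simps)
  moreover have "mA * (norm (x1 - x2))\<^sup>2 \<le> Af (x1 - x2) (x1 - x2)" by (rule Af_coer)
  moreover have g: "norm (\<gamma> x1 - \<gamma> x2) \<le> norm \<gamma> * norm (x1 - x2)"
    using gamma_norm[of "x1 - x2"] by (simp add: blinfun.diff_right)
  moreover have "(norm (\<gamma> x1 - \<gamma> x2))\<^sup>2 \<le> (norm \<gamma> * norm (x1 - x2))\<^sup>2"
    using g by (intro power_mono) auto
  then have "ma * (norm (\<gamma> x1 - \<gamma> x2))\<^sup>2 \<le> ma * (norm \<gamma>)\<^sup>2 * (norm (x1 - x2))\<^sup>2"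
    using J3(1) by (metis mult.assoc mult_left_mono power_mult_distrib)
  moreover have "mL * norm (w1 - w2) * norm (\<gamma> x1 - \<gamma> x2) \<le> mL * norm (w1 - w2) * (norm \<gamma> * norm (x1 - x2))"
    using g J3(2) by (intro mult_left_mono) auto
  ultimately show ?thesis by linarith
qed


lemma contraction:
  assumes "SolP w1 x1" "SolP w2 x2"
  shows "(mA - ma * (norm \<gamma>)\<^sup>2) * norm (x1 - x2) \<le> mL * (norm \<gamma>)\<^sup>2 * norm (w1 - w2)"
proof -
  have e1: "ereal (blinfun_apply f (x2 - x1) - Af x1 (x2 - x1)) \<le> clarke_dd (J (\<gamma> w1)) (\<gamma> x1) (\<gamma> x2 - \<gamma> x1)"
    using assms(1) hw_comp[of w1 x1 "x2 - x1"] unfolding SolP_def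
    by (metis blinfun.diff_right order_trans)
  have e2: "ereal (blinfun_apply f (x1 - x2) - Af x2 (x1 - x2)) \<le> clarke_dd (J (\<gamma> w2)) (\<gamma> x2) (\<gamma> x1 - \<gamma> x2)"
    using assms(2) hw_comp[of w2 x2 "x1 - x2"] unfolding SolP_def
    by (metis blinfun.diff_right order_trans)
  define d where "d = norm (x1 - x2)"
  define n where "n = norm \<gamma>"
  define W where "W = norm (w1 - w2)"
  have c: "mA * d\<^sup>2 \<le> ma * n\<^sup>2 * d\<^sup>2 + mL * norm (\<gamma> w1 - \<gamma> w2) * (n * d)"
    using core[OF e1 e2] unfolding d_def n_def .
  have gw: "norm (\<gamma> w1 - \<gamma> w2) \<le> n * W"
    using gamma_norm[of "w1 - w2"] unfolding n_def W_def by (simp add: blinfun.diff_right)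
  have nd: "n * d \<ge> 0" by (simp add: n_def d_def)
  have "mL * norm (\<gamma> w1 - \<gamma> w2) * (n * d) \<le> mL * (n * W) * (n * d)"
    using gw nd J3(2) by (intro mult_right_mono mult_left_mono) auto
  with c have c2: "mA * d\<^sup>2 \<le> ma * n\<^sup>2 * d\<^sup>2 + mL * (n * W) * (n * d)" by linarith
  show ?thesis
  proof (cases "d = 0")
    case True then show ?thesis using J3(2) by (simp add: d_def W_def)
  next
    case False
    then have dp: "d > 0" by (simp add: d_def)
    have "d * ((mA - ma * n\<^sup>2) * d) \<le> d * (mL * n\<^sup>2 * W)"
      using c2 by (simp add: power2_eq_square algebra_simps)
    then have "(mA - ma * n\<^sup>2) * d \<le> mL * n\<^sup>2 * W" using dp by simp
    then show ?thesis unfolding d_def n_def W_def .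
  qed
qed

lemma SolP_SolX: "SolP u u \<Longrightarrow> SolX u"
  unfolding SolP_def SolX_def using hw_comp order_trans by blast

lemma I_SolX: "problem_I A f J \<gamma> u \<Longrightarrow> SolX u"
proof -
  assume "problem_I A f J \<gamma> u"
  then obtain \<xi> where xi: "\<xi> \<in> clarke_subdiff (J (\<gamma> u)) (\<gamma> u)" "A u + (\<xi> o\<^sub>L \<gamma>) = f"
    unfolding problem_I_def by blast
  show "SolX u" unfolding SolX_def
  proof
    fix v
    have "blinfun_apply f v = Af u v + blinfun_apply \<xi> (\<gamma> v)"
      unfolding xi(2)[symmetric] Af_def by (simp add: plus_blinfun.rep_eq)
    then have "blinfun_apply f v - Af u v = blinfun_apply \<xi> (\<gamma> v)" by simp
    then show "ereal (blinfun_apply f v - Af u v) \<le> clarke_dd (J (\<gamma> u)) (\<gamma> u) (\<gamma> v)"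
      using xi(1) unfolding clarke_subdiff_def by simp
  qed
qed

lemma SolX_I: "SolX u \<Longrightarrow> problem_I A f J \<gamma> u"
proof -
  assume sol: "SolX u"
  define g where "g = J (\<gamma> u)"
  define p where "p = cdd g (\<gamma> u)"
  have gl: "loc_lipschitz g" unfolding g_def by (rule J1)
  interpret sublin p
    by unfold_locales (unfold p_def, rule clarke_subadd[OF gl], rule clarke_poshom[OF gl])
  have dom: "blinfun_apply f v - Af u v \<le> p (\<gamma> v)" for v
    using spec[OF sol[unfolded SolX_def], of v] clarke_dd_real[OF gl, of "\<gamma> u" "\<gamma> v"] unfolding p_def g_def by simp
  have p0: "p 0 = 0" unfolding p_def by (rule clarke_zero_dir)
  define B where "B = {(\<gamma> v, blinfun_apply f v - Af u v) | v. True}"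
  have "hb_good p B"
    unfolding hb_good_def
  proof (intro conjI allI impI)
    show "(0, 0) \<in> B" unfolding B_def
      by (rule CollectI, rule exI[of _ 0]) (simp add: Af_simps)
  next
    fix x a b assume "(x, a) \<in> B" "(x, b) \<in> B"
    then obtain v1 v2 where v: "x = \<gamma> v1" "a = blinfun_apply f v1 - Af u v1" "x = \<gamma> v2" "b = blinfun_apply f v2 - Af u v2"
      unfolding B_def by blast
    have g0: "\<gamma> (v1 - v2) = 0" "\<gamma> (v2 - v1) = 0" using v by (simp_all add: blinfun.diff_right)
    have "blinfun_apply f (v1 - v2) - Af u (v1 - v2) \<le> 0" using dom[of "v1 - v2"] g0 p0 by simp
    moreover have "blinfun_apply f (v2 - v1) - Af u (v2 - v1) \<le> 0" using dom[of "v2 - v1"] g0 p0 by simp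
    ultimately show "a = b" using v by (simp add: Af_simps f_simps)
  next
    fix x a z b assume "(x, a) \<in> B" "(z, b) \<in> B"
    then obtain v1 v2 where v: "x = \<gamma> v1" "a = blinfun_apply f v1 - Af u v1" "z = \<gamma> v2" "b = blinfun_apply f v2 - Af u v2"
      unfolding B_def by blast
    show "(x + z, a + b) \<in> B" unfolding B_def
      by (rule CollectI, rule exI[of _ "v1 + v2"]) (simp add: v Af_simps f_simps blinfun.add_right)
  next
    fix x a c assume "(x, a) \<in> B"
    then obtain v1 where v: "x = \<gamma> v1" "a = blinfun_apply f v1 - Af u v1"
      unfolding B_def by blast
    show "(c *\<^sub>R x, c * a) \<in> B" unfolding B_def
      by (rule CollectI, rule exI[of _ "c *\<^sub>R v1"]) (simp add: v Af_simps f_simps blinfun.scaleR_right algebra_simps)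
  next
    fix x a assume "(x, a) \<in> B"
    then obtain v1 where v: "x = \<gamma> v1" "a = blinfun_apply f v1 - Af u v1"
      unfolding B_def by blast
    show "a \<le> p x" using dom v by simp
  qed
  from hahn_banach[OF this] obtain \<xi> where xi: "linear \<xi>" "\<forall>x. \<xi> x \<le> p x" "\<forall>x a. (x, a) \<in> B \<longrightarrow> \<xi> x = a"
    by blast
  obtain K where K: "K \<ge> 0" "\<And>z. \<bar>cdd g (\<gamma> u) z\<bar> \<le> K * norm z" using clarke_abs_bound[OF gl] by blast
  have nb: "norm (\<xi> z) \<le> norm z * K" for z
  proof -
    have "\<xi> z \<le> K * norm z" using xi(2) K(2)[of z] unfolding p_def by (smt (verit))
    moreover have "- \<xi> z \<le> K * norm z" using xi(2)[rule_format, of "- z"] K(2)[of "- z"] linear_neg[OF xi(1)]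
      unfolding p_def by (smt (verit) norm_minus_cancel)
    ultimately show ?thesis by (simp add: abs_le_iff mult.commute)
  qed
  have bl: "bounded_linear \<xi>"
    unfolding bounded_linear_def bounded_linear_axioms_def using xi(1) nb by blast
  define \<Xi> where "\<Xi> = Blinfun \<xi>"
  have Xi_app: "blinfun_apply \<Xi> = \<xi>" unfolding \<Xi>_def by (rule bounded_linear_Blinfun_apply[OF bl])
  have "\<Xi> \<in> clarke_subdiff (J (\<gamma> u)) (\<gamma> u)"
    unfolding clarke_subdiff_def
  proof (rule CollectI, rule allI)
    fix z show "ereal (blinfun_apply \<Xi> z) \<le> clarke_dd (J (\<gamma> u)) (\<gamma> u) z"
      using xi(2) clarke_dd_real[OF gl, of "\<gamma> u" z] unfolding Xi_app p_def g_def by simp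
  qed
  moreover have "A u + (\<Xi> o\<^sub>L \<gamma>) = f"
  proof (rule blinfun_eqI)
    fix v
    have "\<xi> (\<gamma> v) = blinfun_apply f v - Af u v" using xi(3) unfolding B_def by blast
    then show "blinfun_apply (A u + (\<Xi> o\<^sub>L \<gamma>)) v = blinfun_apply f v"
      by (simp add: plus_blinfun.rep_eq Xi_app Af_def)
  qed
  ultimately show ?thesis unfolding problem_I_def by blast
qed

lemma SolX_unique:
  assumes "SolX x1" "SolX x2" shows "x1 = x2"
proof -
  have e1: "ereal (blinfun_apply f (x2 - x1) - Af x1 (x2 - x1)) \<le> clarke_dd (J (\<gamma> x1)) (\<gamma> x1) (\<gamma> x2 - \<gamma> x1)"
    using assms(1) unfolding SolX_def by (metis blinfun.diff_right)
  have e2: "ereal (blinfun_apply f (x1 - x2) - Af x2 (x1 - x2)) \<le> clarke_dd (J (\<gamma> x2)) (\<gamma> x2) (\<gamma> x1 - \<gamma> x2)"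
    using assms(2) unfolding SolX_def by (metis blinfun.diff_right)
  define d where "d = norm (x1 - x2)"
  define n where "n = norm \<gamma>"
  have c: "mA * d\<^sup>2 \<le> ma * n\<^sup>2 * d\<^sup>2 + mL * norm (\<gamma> x1 - \<gamma> x2) * (n * d)"
    using core[OF e1 e2] unfolding d_def n_def .
  have gw: "norm (\<gamma> x1 - \<gamma> x2) \<le> n * d"
    using gamma_norm[of "x1 - x2"] unfolding n_def d_def by (simp add: blinfun.diff_right)
  have nd: "n * d \<ge> 0" by (simp add: n_def d_def)
  have "mL * norm (\<gamma> x1 - \<gamma> x2) * (n * d) \<le> mL * (n * d) * (n * d)"
    using gw nd J3(2) by (intro mult_right_mono mult_left_mono) auto
  with c have "mA * d\<^sup>2 \<le> (ma + mL) * n\<^sup>2 * d\<^sup>2" by (simp add: power2_eq_square algebra_simps)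
  then have "(mA - (ma + mL) * n\<^sup>2) * d\<^sup>2 \<le> 0" by (simp add: algebra_simps)
  moreover have "mA - (ma + mL) * n\<^sup>2 > 0" using S unfolding n_def by simp
  ultimately have "d\<^sup>2 \<le> 0" by (simp add: mult_le_0_iff)
  then have "d = 0" by simp
  then show ?thesis unfolding d_def by simp
qed

lemma SolX_bound:
  assumes sol: "SolX u" and K: "K \<ge> 0" "\<And>z. ereal (- (K * norm z)) \<le> clarke_dd (J 0) 0 z"
  shows "norm u \<le> (norm f + K * norm \<gamma>) / (mA - (ma + mL) * (norm \<gamma>)\<^sup>2)"
proof -
  define n where "n = norm \<gamma>"
  define \<delta> where "\<delta> = mA - (ma + mL) * n\<^sup>2"
  have dp: "\<delta> > 0" using S unfolding \<delta>_def n_def by simp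
  have e1: "ereal (blinfun_apply f (- u) - Af u (- u)) \<le> clarke_dd (J (\<gamma> u)) (\<gamma> u) (0 - \<gamma> u)"
    using sol unfolding SolX_def by (metis blinfun.minus_right diff_0)
  have e2: "ereal (- (K * norm (\<gamma> u))) \<le> clarke_dd (J 0) 0 (\<gamma> u - 0)" using K(2) by simp
  have "ereal (blinfun_apply f (- u) - Af u (- u)) + ereal (- (K * norm (\<gamma> u)))
     \<le> clarke_dd (J (\<gamma> u)) (\<gamma> u) (0 - \<gamma> u) + clarke_dd (J 0) 0 (\<gamma> u - 0)"
    by (rule add_mono[OF e1 e2])
  also have "\<dots> \<le> ereal (ma * (norm (\<gamma> u - 0))\<^sup>2 + mL * norm (\<gamma> u - 0) * norm (\<gamma> u - 0))"
    by (rule J3(3))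
  finally have r: "Af u u - blinfun_apply f u - K * norm (\<gamma> u) \<le> (ma + mL) * (norm (\<gamma> u))\<^sup>2"
    by (simp add: Af_simps f_simps power2_eq_square algebra_simps)
  have gu: "norm (\<gamma> u) \<le> n * norm u" unfolding n_def by (rule gamma_norm)
  have gu2: "(norm (\<gamma> u))\<^sup>2 \<le> n\<^sup>2 * (norm u)\<^sup>2"
    using gu by (metis norm_ge_zero power_mono power_mult_distrib)
  have fu: "blinfun_apply f u \<le> norm f * norm u" using norm_blinfun[of f u] by simp
  have "mA * (norm u)\<^sup>2 \<le> Af u u" by (rule Af_coer)
  moreover have "(ma + mL) * (norm (\<gamma> u))\<^sup>2 \<le> (ma + mL) * (n\<^sup>2 * (norm u)\<^sup>2)"
    using gu2 J3(1,2) by (intro mult_left_mono) auto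
  moreover have "K * norm (\<gamma> u) \<le> K * (n * norm u)" using gu K(1) by (rule mult_left_mono)
  ultimately have "mA * (norm u)\<^sup>2 \<le> (ma + mL) * (n\<^sup>2 * (norm u)\<^sup>2) + norm f * norm u + K * (n * norm u)"
    using r fu by linarith
  then have "norm u * (\<delta> * norm u) \<le> norm u * (norm f + K * n)"
    unfolding \<delta>_def by (simp add: power2_eq_square algebra_simps)
  then have "\<delta> * norm u \<le> norm f + K * n" if "norm u > 0" using that by simp
  then have "\<delta> * norm u \<le> norm f + K * n"
    using K(1) by (cases "norm u = 0") (auto simp: n_def)
  then show ?thesis using dp unfolding \<delta>_def n_def by (simp add: field_simps)
qed


lemma lagr_eq: "lagr A f J \<gamma> w v = 1/2 * Af v v - blinfun_apply f v + hw w v"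
  unfolding lagr_def Af_def hw_def by simp

lemma O_SolP: "problem_O A f J \<gamma> u \<longleftrightarrow> SolP u u"
proof -
  have eq: "clarke_dd (lagr A f J \<gamma> u) u v = clarke_dd (hw u) u v + ereal (Af u v - blinfun_apply f v)" for v
  proof (rule clarke_sum[OF hw_lip])
    show "eventually (\<lambda>p. cquot (lagr A f J \<gamma> u) v p = cquot (hw u) v p
        + (Af (fst p) v + snd p / 2 * Af v v - blinfun_apply f v)) (CF u)"
      using CF_eventually_pos
    proof eventually_elim
      case (elim p)
      obtain y t where p: "p = (y, t)" by (cases p)
      have t: "t > 0" using elim p by simp
      have "lagr A f J \<gamma> u (y + t *\<^sub>R v) - lagr A f J \<gamma> u y
          = t * Af y v + t * t / 2 * Af v v - t * blinfun_apply f v + (hw u (y + t *\<^sub>R v) - hw u y)"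
        unfolding lagr_eq by (simp add: Af_simps f_simps Af_sym[of v y] algebra_simps)
      then have "cquot (lagr A f J \<gamma> u) v p = (t * Af y v + t * t / 2 * Af v v - t * blinfun_apply f v + (hw u (y + t *\<^sub>R v) - hw u y)) / t"
        unfolding p cquot_def by simp
      also have "\<dots> = (hw u (y + t *\<^sub>R v) - hw u y) / t + (Af y v + t / 2 * Af v v - blinfun_apply f v)"
        using t by (simp add: field_simps)
      finally show ?case unfolding p cquot_def by simp
    qed
    have l1: "((\<lambda>p. Af (fst p) v) \<longlongrightarrow> Af u v) (CF u)"
      unfolding Af_def
      by (rule bounded_bilinear.tendsto[OF bounded_bilinear_blinfun_apply
            bounded_linear.tendsto[OF A1 filterlim_fst] tendsto_const])
    have l2: "(snd \<longlongrightarrow> 0) (CF u)"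
      by (rule filterlim_mono[OF filterlim_snd at_within_le_nhds order_refl])
    have l3: "((\<lambda>p. snd p / 2 * Af v v) \<longlongrightarrow> 0) (CF u)"
      by (rule tendsto_mult_left_zero, rule tendsto_divide_zero, rule l2)
    have "((\<lambda>p. Af (fst p) v + snd p / 2 * Af v v - blinfun_apply f v) \<longlongrightarrow> Af u v + 0 - blinfun_apply f v) (CF u)"
      by (intro tendsto_diff tendsto_add l1 l3 tendsto_const)
    then show "((\<lambda>p. Af (fst p) v + snd p / 2 * Af v v - blinfun_apply f v) \<longlongrightarrow> Af u v - blinfun_apply f v) (CF u)"
      by simp
  qed
  show ?thesis
    unfolding problem_O_def SolP_def clarke_subdiff_def
    using eq clarke_dd_real[OF hw_lip] by (simp add: algebra_simps)
qed


lemma hw_rel: "cdd (hw w) x (y - x) + cdd (hw w) y (x - y) \<le> ma * (norm \<gamma>)\<^sup>2 * (norm (x - y))\<^sup>2"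
proof -
  have "clarke_dd (hw w) x (y - x) + clarke_dd (hw w) y (x - y)
      \<le> clarke_dd (J (\<gamma> w)) (\<gamma> x) (\<gamma> y - \<gamma> x) + clarke_dd (J (\<gamma> w)) (\<gamma> y) (\<gamma> x - \<gamma> y)"
    using add_mono[OF hw_comp[of w x "y - x"] hw_comp[of w y "x - y"]] by (simp add: blinfun.diff_right)
  also have "\<dots> \<le> ereal (ma * (norm (\<gamma> x - \<gamma> y))\<^sup>2 + mL * norm (\<gamma> w - \<gamma> w) * norm (\<gamma> x - \<gamma> y))"
    by (rule J3(3))
  finally have r: "cdd (hw w) x (y - x) + cdd (hw w) y (x - y) \<le> ma * (norm (\<gamma> x - \<gamma> y))\<^sup>2"
    using clarke_dd_real[OF hw_lip] by simp
  have g: "norm (\<gamma> x - \<gamma> y) \<le> norm \<gamma> * norm (x - y)"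
    using gamma_norm[of "x - y"] by (simp add: blinfun.diff_right)
  have "(norm (\<gamma> x - \<gamma> y))\<^sup>2 \<le> (norm \<gamma> * norm (x - y))\<^sup>2"
    using g by (intro power_mono) auto
  then have "ma * (norm (\<gamma> x - \<gamma> y))\<^sup>2 \<le> ma * (norm \<gamma>)\<^sup>2 * (norm (x - y))\<^sup>2"
    using J3(1) by (metis mult.assoc mult_left_mono power_mult_distrib)
  with r show ?thesis by linarith
qed

definition mm where "mm = ma * (norm \<gamma>)\<^sup>2"

lemma mm_nonneg: "mm \<ge> 0" unfolding mm_def using J3(1) by simp
lemma mm_less: "mm < mA"
proof -
  have "mm \<le> (ma + mL) * (norm \<gamma>)\<^sup>2" unfolding mm_def using J3(2) by (simp add: distrib_right)
  then show ?thesis using S by simp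
qed

lemma Phi_mid: "Phi w ((1/2) *\<^sub>R (x + y)) \<le> (Phi w x + Phi w y) / 2 - (mA - mm) / 8 * (norm (x - y))\<^sup>2"
proof -
  have hm: "2 * hw w ((1/2) *\<^sub>R (x + y)) \<le> hw w x + hw w y + mm * (norm (x - y))\<^sup>2 / 4"
    by (rule mid_ineq[OF hw_lip mm_nonneg]) (use hw_rel in \<open>simp add: mm_def\<close>)
  have e1: "Af ((1/2) *\<^sub>R (x + y)) ((1/2) *\<^sub>R (x + y)) = (Af x x + 2 * Af x y + Af y y) / 4"
    by (simp only: Af_scale_left Af_scale_right Af_add_left Af_add_right Af_sym[of y x]) (simp add: field_simps)
  have e2: "Af (x - y) (x - y) = Af x x - 2 * Af x y + Af y y"
    by (simp only: Af_diff_left Af_diff_right Af_sym[of y x])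
  have e3: "blinfun_apply f ((1/2) *\<^sub>R (x + y)) = (blinfun_apply f x + blinfun_apply f y) / 2"
    by (simp add: f_simps)
  have c: "mA * (norm (x - y))\<^sup>2 \<le> Af (x - y) (x - y)" by (rule Af_coer)
  show ?thesis unfolding Phi_def e1 e3 using hm e2 c by (simp add: field_simps)
qed

lemma Phi_low: "\<exists>C. \<forall>v. C \<le> Phi w v"
proof -
  obtain K where K: "K \<ge> 0" "\<And>z. \<bar>cdd (hw w) 0 z\<bar> \<le> K * norm z"
    using clarke_abs_bound[OF hw_lip] by blast
  have Kl: "- (K * norm z) \<le> cdd (hw w) 0 z" for z using K(2)[of z] by simp
  define \<alpha> where "\<alpha> = (mA - mm) / 2"
  have \<alpha>: "\<alpha> > 0" using mm_less by (simp add: \<alpha>_def)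
  define \<beta> where "\<beta> = norm f + K"
  show ?thesis
  proof (intro exI[of _ "hw w 0 - (\<beta>\<^sup>2) / (4 * \<alpha>)"] allI)
    fix v :: 'v
    define r where "r = norm v"
    have low: "hw w 0 - hw w v \<le> mm * r\<^sup>2 / 2 + K * r"
      unfolding r_def by (rule low_ineq[OF hw_lip mm_nonneg _ Kl]) (use hw_rel in \<open>simp add: mm_def\<close>)
    have fv: "blinfun_apply f v \<le> norm f * r" using norm_blinfun[of f v] unfolding r_def by simp
    have av: "mA * r\<^sup>2 \<le> Af v v" using Af_coer[of v] unfolding r_def .
    have "hw w 0 + (\<alpha> * r\<^sup>2 - \<beta> * r) \<le> Phi w v"
      unfolding Phi_def
    proof -
      have "(mA - mm) / 2 * r\<^sup>2 = mA * r\<^sup>2 / 2 - mm * r\<^sup>2 / 2" by (simp add: field_simps)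
      moreover have "(norm f + K) * r = norm f * r + K * r" by (simp add: algebra_simps)
      ultimately show "hw w 0 + (\<alpha> * r\<^sup>2 - \<beta> * r) \<le> 1 / 2 * Af v v - blinfun_apply f v + hw w v"
        unfolding \<alpha>_def \<beta>_def using low fv av by linarith
    qed
    moreover have "- (\<beta>\<^sup>2) / (4 * \<alpha>) \<le> \<alpha> * r\<^sup>2 - \<beta> * r"
    proof -
      have sq: "0 \<le> (2 * \<alpha> * r - \<beta>)\<^sup>2" by simp
      have "- (\<beta>\<^sup>2) \<le> (\<alpha> * r\<^sup>2 - \<beta> * r) * (4 * \<alpha>)"
      proof -
        have "(\<alpha> * r\<^sup>2 - \<beta> * r) * (4 * \<alpha>) + \<beta>\<^sup>2 = (2 * \<alpha> * r - \<beta>)\<^sup>2"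
          by (simp add: power2_eq_square algebra_simps)
        then show ?thesis using sq by linarith
      qed
      then have "(- (\<beta>\<^sup>2)) / (4 * \<alpha>) \<le> \<alpha> * r\<^sup>2 - \<beta> * r"
        by (subst pos_divide_le_eq) (use \<alpha> in auto)
      then show ?thesis by simp
    qed
    ultimately show "hw w 0 - (\<beta>\<^sup>2) / (4 * \<alpha>) \<le> Phi w v" by linarith
  qed
qed

lemma Phi_cont: "isCont (Phi w) x"
proof -
  have eq: "Phi w = (\<lambda>v. 1/2 * Af v v - blinfun_apply f v + hw w v)" by (rule ext) (simp add: Phi_def)
  have c1: "((\<lambda>v. Af v v) \<longlongrightarrow> Af x x) (at x)"
    unfolding Af_def
    by (rule bounded_bilinear.tendsto[OF bounded_bilinear_blinfun_apply
          bounded_linear.tendsto[OF A1 tendsto_ident_at] tendsto_ident_at])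
  have c2: "((\<lambda>v. blinfun_apply f v) \<longlongrightarrow> blinfun_apply f x) (at x)"
    by (rule bounded_linear.tendsto[OF blinfun.bounded_linear_right tendsto_ident_at])
  have c3: "(hw w \<longlongrightarrow> hw w x) (at x)" using loc_lipschitz_isCont[OF hw_lip] by (simp add: isCont_def)
  show ?thesis unfolding isCont_def eq
    by (intro tendsto_add tendsto_diff tendsto_mult tendsto_const c1 c2 c3)
qed

lemma Phi_min: "\<exists>x. \<forall>y. Phi w x \<le> Phi w y"
proof -
  obtain C where C: "\<And>v. C \<le> Phi w v" using Phi_low by blast
  define I where "I = Inf (range (Phi w))"
  have bdd: "bdd_below (range (Phi w))" by (rule bdd_belowI[of _ C]) (use C in auto)
  have Ile: "I \<le> Phi w y" for y unfolding I_def by (rule cInf_lower[OF _ bdd]) simp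
  have "\<exists>x. Phi w x < I + inverse (real (Suc n))" for n
  proof -
    have "I < I + inverse (real (Suc n))" by simp
    then obtain z where "z \<in> range (Phi w)" "z < I + inverse (real (Suc n))"
      unfolding I_def using cInf_lessD[of "range (Phi w)"] by blast
    then show ?thesis by blast
  qed
  then obtain X where X: "\<And>n. Phi w (X n) < I + inverse (real (Suc n))" by metis
  define \<mu> where "\<mu> = (mA - mm) / 8"
  have \<mu>: "\<mu> > 0" using mm_less by (simp add: \<mu>_def)
  have "Cauchy X"
    unfolding Cauchy_def
  proof (intro allI impI)
    fix e :: real assume e: "e > 0"
    obtain M where M: "inverse (real (Suc M)) < \<mu> * e\<^sup>2" using reals_Archimedean[of "\<mu> * e\<^sup>2"] \<mu> e by auto
    show "\<exists>M. \<forall>m\<ge>M. \<forall>n\<ge>M. dist (X m) (X n) < e"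
    proof (intro exI[of _ M] allI impI)
      fix m n assume mn: "m \<ge> M" "n \<ge> M"
      have im: "inverse (real (Suc m)) \<le> inverse (real (Suc M))" using mn by (intro le_imp_inverse_le) auto
      have inn: "inverse (real (Suc n)) \<le> inverse (real (Suc M))" using mn by (intro le_imp_inverse_le) auto
      have "\<mu> * (norm (X m - X n))\<^sup>2 \<le> (Phi w (X m) + Phi w (X n)) / 2 - Phi w ((1/2) *\<^sub>R (X m + X n))"
        using Phi_mid[of w "X m" "X n"] unfolding \<mu>_def by linarith
      also have "\<dots> \<le> (Phi w (X m) + Phi w (X n)) / 2 - I" using Ile[of "(1/2) *\<^sub>R (X m + X n)"] by simp
      also have "\<dots> < (I + inverse (real (Suc m)) + (I + inverse (real (Suc n)))) / 2 - I"
        using add_strict_mono[OF X[of m] X[of n]] by (simp add: divide_strict_right_mono)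
      also have "\<dots> \<le> inverse (real (Suc M))"
      proof -
        have gen: "\<And>a b c (J::real). a \<le> c \<Longrightarrow> b \<le> c \<Longrightarrow> (J + a + (J + b)) / 2 - J \<le> c" by (simp add: field_simps)
        show ?thesis by (rule gen[OF im inn])
      qed
      also have "\<dots> < \<mu> * e\<^sup>2" by (rule M)
      finally have "(norm (X m - X n))\<^sup>2 < e\<^sup>2" using \<mu> by simp
      then have "norm (X m - X n) < e" using e by (meson less_imp_le power_less_imp_less_base)
      then show "dist (X m) (X n) < e" by (simp add: dist_norm)
    qed
  qed
  then have "convergent X" by (rule Cauchy_convergent)
  then obtain x where x: "X \<longlonglongrightarrow> x" unfolding convergent_def by blast
  have l1: "(\<lambda>n. Phi w (X n)) \<longlonglongrightarrow> Phi w x" by (rule isCont_tendsto_compose[OF Phi_cont x])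
  have "Phi w x \<le> I"
    by (rule LIMSEQ_le[OF l1 LIMSEQ_inverse_real_of_nat_add]) (use X less_imp_le in blast)
  then show ?thesis using Ile by (intro exI[of _ x]) (auto intro: order_trans)
qed

lemma min_SolP:
  assumes min: "\<And>y. Phi w x \<le> Phi w y"
  shows "SolP w x"
  unfolding SolP_def
proof
  fix v
  define a where "a = blinfun_apply f v - Af x v"
  show "ereal a \<le> clarke_dd (hw w) x v" unfolding a_def[symmetric]
  proof (rule clarke_low)
    fix e :: real assume e: "e > 0"
    define \<delta> where "\<delta> = e / (\<bar>Af v v\<bar> + 1)"
    have dp: "\<delta> > 0" using e by (simp add: \<delta>_def add_nonneg_pos)
    show "\<exists>\<delta>>0. \<forall>t. 0 < t \<and> t < \<delta> \<longrightarrow> a - e < cquot (hw w) v (x, t)"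
    proof (intro exI[of _ \<delta>] conjI dp allI impI)
      fix t assume t: "0 < t \<and> t < \<delta>"
      have diff: "Phi w (x + t *\<^sub>R v) - Phi w x
          = t * Af x v + t * t / 2 * Af v v - t * blinfun_apply f v + (hw w (x + t *\<^sub>R v) - hw w x)"
        unfolding Phi_def by (simp only: Af_add_left Af_add_right Af_scale_left Af_scale_right f_simps Af_sym[of v x]) (simp add: field_simps)
      have "0 \<le> Phi w (x + t *\<^sub>R v) - Phi w x" using min[of "x + t *\<^sub>R v"] by simp
      then have "t * (a - t / 2 * Af v v) \<le> hw w (x + t *\<^sub>R v) - hw w x"
        unfolding diff a_def by (simp add: algebra_simps)
      then have q: "a - t / 2 * Af v v \<le> cquot (hw w) v (x, t)"
        using t by (simp add: cquot_def pos_le_divide_eq mult.commute)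
      have "t * (\<bar>Af v v\<bar> + 1) < e" using t by (simp add: \<delta>_def pos_less_divide_eq add_nonneg_pos)
      then have "t * \<bar>Af v v\<bar> < e" using t by (simp add: distrib_left)
      moreover have "t / 2 * Af v v \<le> t * \<bar>Af v v\<bar>" using t
      proof -
        have "t / 2 * Af v v \<le> t / 2 * \<bar>Af v v\<bar>" using t by (intro mult_left_mono) auto
        moreover have "t / 2 * \<bar>Af v v\<bar> \<le> t * \<bar>Af v v\<bar>" using t by (intro mult_right_mono) auto
        ultimately show ?thesis by linarith
      qed
      ultimately show "a - e < cquot (hw w) v (x, t)" using q by linarith
    qed
  qed
qed

lemma exists_SolP: "\<exists>x. SolP w x"
  using Phi_min[of w] min_SolP by blast

lemma fixed_point: "\<exists>u. SolP u u"
proof -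
  define T where "T w = (SOME x. SolP w x)" for w
  have TS: "SolP w (T w)" for w unfolding T_def using exists_SolP by (rule someI_ex)
  define k where "k = mL * (norm \<gamma>)\<^sup>2 / (mA - mm)"
  have pos: "mA - mm > 0" using mm_less by simp
  have k0: "0 \<le> k" unfolding k_def using pos J3(2) by simp
  have k1: "k < 1" unfolding k_def using pos S by (simp add: mm_def divide_less_eq algebra_simps)
  have "\<forall>x y. dist (T x) (T y) \<le> k * dist x y"
  proof (intro allI)
    fix x y
    have "(mA - mm) * norm (T x - T y) \<le> mL * (norm \<gamma>)\<^sup>2 * norm (x - y)"
      using contraction[OF TS TS] unfolding mm_def .
    then show "dist (T x) (T y) \<le> k * dist x y"
      unfolding k_def dist_norm using pos by (simp add: field_simps)
  qed
  from banach_fix_type[OF k0 k1 this] obtain u where "T u = u" by blast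
  then show ?thesis using TS[of u] by metis
qed

end


theorem theorem1:
  fixes A :: "'v::banach \<Rightarrow> ('v \<Rightarrow>\<^sub>L real)"
    and J :: "'x::banach \<Rightarrow> 'x \<Rightarrow> real"
    and \<gamma> :: "'v \<Rightarrow>\<^sub>L 'x"
    and m_A c0 c1 c2 m_alpha m_L :: real
  assumes refl: "reflexive_space TYPE('v)"
    and A1: "bounded_linear A"
    and A2: "\<And>u v. blinfun_apply (A u) v = blinfun_apply (A v) u"
    and A3: "m_A > 0" "\<And>u. blinfun_apply (A u) u \<ge> m_A * (norm u)\<^sup>2"
    and J1: "\<And>w. loc_lipschitz (J w)"
    and J2: "c0 \<ge> 0" "c1 \<ge> 0" "c2 \<ge> 0"
      "\<And>w v \<xi>. \<xi> \<in> clarke_subdiff (J w) v \<Longrightarrow> norm \<xi> \<le> c0 + c1 * norm v + c2 * norm w"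
    and J3: "m_alpha \<ge> 0" "m_L \<ge> 0"
      "\<And>w1 w2 v1 v2. clarke_dd (J w1) v1 (v2 - v1) + clarke_dd (J w2) v2 (v1 - v2)
          \<le> ereal (m_alpha * (norm (v1 - v2))\<^sup>2 + m_L * norm (w1 - w2) * norm (v1 - v2))"
    and S: "m_A > (m_alpha + m_L) * (norm \<gamma>)\<^sup>2"
  shows "\<exists>c>0. \<forall>f :: 'v \<Rightarrow>\<^sub>L real.
           (\<forall>u. problem_I A f J \<gamma> u \<longleftrightarrow> problem_O A f J \<gamma> u)
         \<and> (\<exists>!u. problem_I A f J \<gamma> u)
         \<and> (\<forall>u. problem_I A f J \<gamma> u \<longrightarrow> norm u \<le> c * (1 + norm f))"
proof -
  obtain K where K: "K \<ge> 0" "\<And>z. \<bar>cdd (J 0) 0 z\<bar> \<le> K * norm z"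
    using clarke_abs_bound[OF J1] by blast
  have Klow: "ereal (- (K * norm z)) \<le> clarke_dd (J 0) 0 z" for z
    using K(2)[of z] clarke_dd_real[OF J1, where x=0 and v=z] by simp
  define \<delta> where "\<delta> = m_A - (m_alpha + m_L) * (norm \<gamma>)\<^sup>2"
  have \<delta>: "\<delta> > 0" using S by (simp add: \<delta>_def)
  define c where "c = (1 + K * norm \<gamma>) / \<delta>"
  have Kn: "K * norm \<gamma> \<ge> 0" using K(1) by simp
  have c: "c > 0" unfolding c_def using \<delta> Kn by simp
  show ?thesis
  proof (rule exI[of _ c], rule conjI[OF c], rule allI, intro conjI)
    fix f :: "'v \<Rightarrow>\<^sub>L real"
    interpret setting A J \<gamma> m_A m_alpha m_L f
      by (rule setting.intro[OF A1 A2 A3 J1 J3 S])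
    obtain u0 where u0: "SolP u0 u0" using fixed_point by blast
    have u0X: "SolX u0" by (rule SolP_SolX[OF u0])
    show "\<forall>u. problem_I A f J \<gamma> u \<longleftrightarrow> problem_O A f J \<gamma> u"
    proof
      fix u
      show "problem_I A f J \<gamma> u \<longleftrightarrow> problem_O A f J \<gamma> u"
      proof
        assume "problem_I A f J \<gamma> u"
        then have "SolX u" by (rule I_SolX)
        then have "u = u0" using SolX_unique u0X by blast
        then show "problem_O A f J \<gamma> u" using O_SolP u0 by simp
      next
        assume "problem_O A f J \<gamma> u"
        then have "SolP u u" using O_SolP by simp
        then show "problem_I A f J \<gamma> u" using SolX_I SolP_SolX by blast
      qed
    qed
    show "\<exists>!u. problem_I A f J \<gamma> u"
    proof (rule ex1I[of _ u0])
      show "problem_I A f J \<gamma> u0" by (rule SolX_I[OF u0X])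
      fix u assume "problem_I A f J \<gamma> u"
      then have "SolX u" by (rule I_SolX)
      then show "u = u0" using SolX_unique u0X by blast
    qed
    show "\<forall>u. problem_I A f J \<gamma> u \<longrightarrow> norm u \<le> c * (1 + norm f)"
    proof (intro allI impI)
      fix u assume "problem_I A f J \<gamma> u"
      then have "SolX u" by (rule I_SolX)
      from SolX_bound[OF this K(1) Klow]
      have "norm u \<le> (norm f + K * norm \<gamma>) / \<delta>" unfolding \<delta>_def .
      also have "\<dots> \<le> (1 + K * norm \<gamma>) * (1 + norm f) / \<delta>"
      proof (rule divide_right_mono)
        have "0 \<le> K * norm \<gamma> * norm f" using Kn by simp
        then show "norm f + K * norm \<gamma> \<le> (1 + K * norm \<gamma>) * (1 + norm f)"
          by (simp add: algebra_simps)
      qed (use \<delta> in simp)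
      also have "\<dots> = c * (1 + norm f)" unfolding c_def by simp
      finally show "norm u \<le> c * (1 + norm f)" .
    qed
  qed
qed

end
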